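(* Assume there exists $\mathbf q\in\Omega$ with $\mu(Dq^2+k)-\chi\bar U f<0$. Then there exists a constant $C_1\ge1$ depending only on $k,\bar U,D,\mu,f,\chi$ (and $d$) such that for every initial datum $\mathbf w(\cdot,0)\in[L^2((0,\pi)^d)]^2$, the solution $\mathbf w(\cdot,t)=e^{\mathcal L t}\mathbf w(\cdot,0)$ of the linearized Keller–Segel system satisfies $$\|\mathbf w(\cdot,t)\|\le C_1e^{\lambda_{\max}t}\|\mathbf w(\cdot,0)\|\quad\text{for all }t\ge0.$$
   Context: Fix $d\in\{1,2,3\}$ and constants $\mu,\chi,D,f,k,\bar U>0$. The linearized Keller–Segel system is $u_t=\mu\Delta u-\chi\bar U\Delta v$, $v_t=D\Delta v+fu-kv$ on $(0,\pi)^d$ with Neumann boundary conditions $\partial_{x_i}u=\partial_{x_i}v=0$ at $x_i\in\{0,\pi\}$. Let $\Omega=(\mathbb N\cup\{0\})^d$, $e_{\mathbf q}(x)=\prod_{i=1}^d\cos(q_ix_i)$, $q^2=\sum_iq_i^2$. For each $\mathbf q$ let $\lambda_-(\mathbf q)<\lambda_+(\mathbf q)$ be the roots of $\lambda^2+\{q^2(\mu+D)+k\}\lambda+q^2\{\mu(Dq^2+k)-\chi\bar Uf\}=0$ and $\mathbf r_\pm(\mathbf q)=\big[\frac{\lambda_\pm(\mathbf q)+Dq^2+k}{f},1\big]$. Writing $\mathbf w(\cdot,0)=\sum_{\mathbf q}\{w^-_{\mathbf q}\mathbf r_-(\mathbf q)+w^+_{\mathbf q}\mathbf r_+(\mathbf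 q)\}e_{\mathbf q}$, the solution operator is $e^{\mathcal Lt}\mathbf w(\cdot,0)=\sum_{\mathbf q}\{w^-_{\mathbf q}\mathbf r_-(\mathbf q)e^{\lambda_-(\mathbf q)t}+w^+_{\mathbf q}\mathbf r_+(\mathbf q)e^{\lambda_+(\mathbf q)t}\}e_{\mathbf q}$. $\lambda_{\max}=\max_{\mathbf q\in\Omega}\lambda_+(\mathbf q)$. $\|\cdot\|$ is the $L^2((0,\pi)^d)$ norm. *)

theory Defs
  imports "HOL-Analysis.Analysis"
begin

definition cube :: "(real^'d::finite) set" where
  "cube = {x. \<forall>i. 0 < x$i \<and> x$i < pi}"

text \<open>Wave vectors q in Omega = (N u {0})^d are functions 'd => nat.\<close>
definition qsq :: "('d::finite \<Rightarrow> nat) \<Rightarrow> real" where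
  "qsq q = (\<Sum>i\<in>UNIV. (real (q i))^2)"

definition eq :: "('d::finite \<Rightarrow> nat) \<Rightarrow> real^'d \<Rightarrow> real" where
  "eq q x = (\<Prod>i\<in>UNIV. cos (real (q i) * x$i))"

definition L2 :: "(real^'d::finite \<Rightarrow> real) \<Rightarrow> bool" where
  "L2 g \<longleftrightarrow> g \<in> borel_measurable (lebesgue_on (cube::(real^'d) set)) \<and>
     integrable (lebesgue_on (cube::(real^'d) set)) (\<lambda>x. (g x)^2)"

definition L2norm :: "(real^'d::finite \<Rightarrow> real) \<Rightarrow> (real^'d \<Rightarrow> real) \<Rightarrow> real" where
  "L2norm u v = sqrt (integral\<^sup>L (lebesgue_on (cube::(real^'d) set)) (\<lambda>x. (u x)^2 + (v x)^2))"

text \<open>Cosine (Fourier) coefficient of g against e_q (unnormalised inner product).\<close>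
definition coeff :: "(real^'d::finite \<Rightarrow> real) \<Rightarrow> ('d \<Rightarrow> nat) \<Rightarrow> real" where
  "coeff g q = integral\<^sup>L (lebesgue_on (cube::(real^'d) set)) (\<lambda>x. g x * eq q x)"

text \<open>The roots lambda_-(q) < lambda_+(q) of
  lambda^2 + (q^2(mu+D)+k) lambda + q^2(mu(D q^2+k) - chi U f) = 0.\<close>
definition lam_minus :: "real \<Rightarrow> real \<Rightarrow> real \<Rightarrow> real \<Rightarrow> real \<Rightarrow> real \<Rightarrow> ('d::finite \<Rightarrow> nat) \<Rightarrow> real" where
  "lam_minus mu chi D f k U q =
     (let B = qsq q * (mu + D) + k; C = qsq q * (mu * (D * qsq q + k) - chi * U * f)
      in (- B - sqrt (B^2 - 4 * C)) / 2)"

definition lam_plus :: "real \<Rightarrow> real \<Rightarrow> real \<Rightarrow> real \<Rightarrow> real \<Rightarrow> real \<Rightarrow> ('d::finite \<Rightarrow> nat) \<Rightarrow> real" where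
  "lam_plus mu chi D f k U q =
     (let B = qsq q * (mu + D) + k; C = qsq q * (mu * (D * qsq q + k) - chi * U * f)
      in (- B + sqrt (B^2 - 4 * C)) / 2)"

text \<open>lambda_max = max over Omega of lambda_+ (the max is attained).\<close>
definition lam_max :: "real \<Rightarrow> real \<Rightarrow> real \<Rightarrow> real \<Rightarrow> real \<Rightarrow> real \<Rightarrow> 'd::finite itself \<Rightarrow> real" where
  "lam_max mu chi D f k U (TYPE('d)) = (SUP q\<in>(UNIV::('d \<Rightarrow> nat) set). lam_plus mu chi D f k U q)"

text \<open>First component of the eigenvector r_(+/-)(q) = [(lambda + D q^2 + k)/f, 1].\<close>
definition rfirst :: "real \<Rightarrow> real \<Rightarrow> real \<Rightarrow> real \<Rightarrow> ('d::finite \<Rightarrow> nat) \<Rightarrow> real" where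
  "rfirst D f k lam q = (lam + D * qsq q + k) / f"

text \<open>(u,v) is the solution e^{Lt} w(.,0) with w(.,0) = (u0,v0):
  the cosine coefficients of w(.,0) are wm_q r_-(q) + wp_q r_+(q), and those of w(.,t)
  are wm_q r_-(q) e^{lambda_- t} + wp_q r_+(q) e^{lambda_+ t}, for all t >= 0.
  (Coefficients are taken w.r.t. the unnormalised inner product with e_q; the
  normalisation factor is a common positive constant per q and is absorbed in wm, wp.)\<close>
definition ks_solution ::
  "real \<Rightarrow> real \<Rightarrow> real \<Rightarrow> real \<Rightarrow> real \<Rightarrow> real \<Rightarrow> (real^'d::finite \<Rightarrow> real) \<Rightarrow> (real^'d \<Rightarrow> real)
   \<Rightarrow> (real \<Rightarrow> real^'d \<Rightarrow> real) \<Rightarrow> (real \<Rightarrow> real^'d \<Rightarrow> real) \<Rightarrow> bool" where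
  "ks_solution mu chi D f k U u0 v0 u v \<longleftrightarrow>
    (\<exists>wm wp :: ('d \<Rightarrow> nat) \<Rightarrow> real. \<forall>q.
       (let lm = lam_minus mu chi D f k U q; lp = lam_plus mu chi D f k U q in
        coeff u0 q = wm q * rfirst D f k lm q + wp q * rfirst D f k lp q \<and>
        coeff v0 q = wm q + wp q \<and>
        (\<forall>t\<ge>0. coeff (u t) q = wm q * rfirst D f k lm q * exp (lm * t)
                              + wp q * rfirst D f k lp q * exp (lp * t) \<and>
               coeff (v t) q = wm q * exp (lm * t) + wp q * exp (lp * t))))"

end

theory Submission
  imports Defs
begin

lemma sin_nat_pi: "sin (real (n::nat) * pi) = 0"
  by (simp add: sin_zero_iff_int2)

lemma sin_int_pi: "sin (real_of_int (n::int) * pi) = 0"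
  by (simp add: sin_zero_iff_int2)

lemma cos_cos_LBINT:
  "(LBINT y=ereal 0..ereal pi. cos (real a * y) * cos (real b * y)) =
     (if a = b then (if a = 0 then pi else pi/2) else 0)"
proof -
  have cont: "continuous_on {min 0 pi..max 0 pi} (\<lambda>y. cos (real a * y) * cos (real b * y))"
    by (intro continuous_intros)
  consider "a \<noteq> b" | "a = b" "a = 0" | "a = b" "a \<noteq> 0" by blast
  then show ?thesis
  proof cases
    case 1
    define F where "F y = (sin ((real a - real b) * y) / (real a - real b) + sin ((real a + real b) * y) / (real a + real b)) / 2" for y
    have ne1: "real a - real b \<noteq> 0" using 1 by simp
    have ne2: "real a + real b \<noteq> 0" using 1 by linarith
    have der: "(F has_vector_derivative cos (real a * y) * cos (real b * y)) (at y within X)" for y X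
    proof -
      have "(F has_real_derivative (cos ((real a - real b) * y) * (real a - real b) / (real a - real b) + cos ((real a + real b) * y) * (real a + real b) / (real a + real b)) / 2) (at y within X)"
        unfolding F_def by (auto intro!: derivative_eq_intros)
      moreover have "(cos ((real a - real b) * y) * (real a - real b) / (real a - real b) + cos ((real a + real b) * y) * (real a + real b) / (real a + real b)) / 2 = cos (real a * y) * cos (real b * y)"
      proof -
        have e1: "c * (real a - real b) / (real a - real b) = c" for c using ne1 by simp
        have e2: "c * (real a + real b) / (real a + real b) = c" for c using ne2 by simp
        show ?thesis unfolding e1 e2 cos_times_cos by (simp add: algebra_simps)
      qed
      ultimately show ?thesis by (simp add: has_real_derivative_iff_has_vector_derivative)
    qed
    have "(LBINT y=ereal 0..ereal pi. cos (real a * y) * cos (real b * y)) = F pi - F 0"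
      by (rule interval_integral_FTC_finite[OF cont der])
    also have "F pi = 0"
    proof -
      have "sin ((real a - real b) * pi) = 0"
        using sin_int_pi[of "int a - int b"] by simp
      moreover have "sin ((real a + real b) * pi) = 0"
        using sin_nat_pi[of "a + b"] by simp
      ultimately show ?thesis by (simp add: F_def)
    qed
    finally show ?thesis using 1 by (simp add: F_def)
  next
    case 2
    have der: "((\<lambda>y. y) has_vector_derivative cos (real a * y) * cos (real b * y)) (at y within X)" for y X
      using 2 by (auto intro!: derivative_eq_intros simp: has_real_derivative_iff_has_vector_derivative[symmetric])
    show ?thesis using interval_integral_FTC_finite[OF cont der] 2 by simp
  next
    case 3
    define F where "F y = y/2 + sin (2 * real a * y) / (4 * real a)" for y
    have der: "(F has_vector_derivative cos (real a * y) * cos (real b * y)) (at y within X)" for y X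
    proof -
      have "(F has_real_derivative 1/2 + cos (2 * real a * y) * (2 * real a) / (4 * real a)) (at y within X)"
        unfolding F_def by (auto intro!: derivative_eq_intros)
      moreover have "1/2 + cos (2 * real a * y) * (2 * real a) / (4 * real a) = cos (real a * y) * cos (real b * y)"
        using 3 by (simp add: cos_times_cos algebra_simps)
      ultimately show ?thesis by (simp add: has_real_derivative_iff_has_vector_derivative)
    qed
    have "sin (2 * real a * pi) = 0" using sin_nat_pi[of "2*a"] by simp
    then show ?thesis using interval_integral_FTC_finite[OF cont der] 3 by (simp add: F_def)
  qed
qed

lemma integral_lborel_prod:
  fixes f :: "'a::euclidean_space \<Rightarrow> real \<Rightarrow> real"
  assumes [measurable]: "\<And>b. b \<in> Basis \<Longrightarrow> f b \<in> borel_measurable borel"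
  assumes int: "\<And>b. b \<in> Basis \<Longrightarrow> integrable lborel (f b)"
  shows "(\<integral>x. (\<Prod>b\<in>Basis. f b (x \<bullet> b)) \<partial>lborel) = (\<Prod>b\<in>Basis. (\<integral>x. f b x \<partial>lborel))"
proof -
  interpret product_sigma_finite "\<lambda>_. lborel" by unfold_locales
  have meas: "(\<lambda>g. \<Sum>b\<in>Basis. g b *\<^sub>R b) \<in> measurable (\<Pi>\<^sub>M b\<in>Basis. lborel) (borel :: 'a measure)"
    by measurable
  have "(\<integral>x. (\<Prod>b\<in>Basis. f b (x \<bullet> b)) \<partial>lborel) =
        (\<integral>g. (\<Prod>b\<in>Basis. f b ((\<Sum>c\<in>Basis. g c *\<^sub>R c) \<bullet> b)) \<partial>(\<Pi>\<^sub>M b\<in>Basis. lborel))"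
    by (subst lborel_eq) (rule integral_distr[OF meas], measurable)
  also have "\<dots> = (\<integral>g. (\<Prod>b\<in>Basis. f b (g b)) \<partial>(\<Pi>\<^sub>M b\<in>Basis. lborel))"
    by (intro Bochner_Integration.integral_cong refl prod.cong)
       (simp add: inner_sum_left inner_Basis if_distrib sum.delta cong: if_cong)
  also have "\<dots> = (\<Prod>b\<in>Basis. (\<integral>x. f b x \<partial>lborel))"
    by (rule product_integral_prod) (auto intro: int)
  finally show ?thesis .
qed

lemma cube_open: "open (cube :: (real^'d::finite) set)"
proof -
  have "cube = box 0 (\<chi> i. pi :: real^'d)"
    by (auto simp: cube_def mem_box_cart)
  then show ?thesis by (metis open_box)
qed

lemma cube_sets_lebesgue: "(cube :: (real^'d::finite) set) \<in> sets lebesgue"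
  by (simp add: cube_open borel_open)

lemma indicator_cube: "indicator (cube :: (real^'d::finite) set) x = (\<Prod>i\<in>UNIV. indicator {0<..<pi} (x$i) :: real)"
proof (cases "x \<in> cube")
  case True then show ?thesis by (simp add: cube_def indicator_def)
next
  case False
  then obtain i where "\<not> (0 < x$i \<and> x$i < pi)" by (auto simp: cube_def)
  then have "indicator {0<..<pi} (x$i) = (0::real)" by (simp add: indicator_def)
  then have "(\<Prod>i\<in>UNIV. indicator {0<..<pi} (x$i) :: real) = 0"
    by (meson UNIV_I finite prod_zero)
  then show ?thesis using False by simp
qed

lemma integral_cube_prod:
  fixes \<phi> :: "'d::finite \<Rightarrow> real \<Rightarrow> real"
  assumes cont: "\<And>i. continuous_on UNIV (\<phi> i)"
  shows "integral\<^sup>L (lebesgue_on (cube::(real^'d) set)) (\<lambda>x. \<Prod>i\<in>UNIV. \<phi> i (x$i))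
         = (\<Prod>i\<in>UNIV. LBINT y=ereal 0..ereal pi. \<phi> i y)"
proof -
  define \<psi> where "\<psi> i y = indicator {0<..<pi} y * \<phi> i y" for i y
  define idx :: "real^'d \<Rightarrow> 'd" where "idx b = (SOME i. b = axis i 1)" for b
  have idx: "idx (axis i 1) = i" for i
    unfolding idx_def by (rule someI2[of _ i]) (auto simp: axis_eq_axis)
  have Basis_eq: "(Basis :: (real^'d) set) = range (\<lambda>i. axis i 1)"
    by (auto simp: Basis_vec_def)
  have inj: "inj (\<lambda>i::'d. axis i (1::real))"
    by (auto simp: inj_def axis_eq_axis)
  have meas_phi[measurable]: "\<phi> i \<in> borel_measurable borel" for i
    using cont by (simp add: borel_measurable_continuous_onI)
  have meas_psi[measurable]: "\<psi> i \<in> borel_measurable borel" for i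
    unfolding \<psi>_def by measurable
  have int_psi: "integrable lborel (\<psi> i)" for i
  proof -
    have "interval_lebesgue_integrable lborel (ereal 0) (ereal pi) (\<phi> i)"
      by (rule interval_integrable_isCont) (metis cont continuous_on_eq_continuous_at open_UNIV UNIV_I)
    then show ?thesis
      by (simp add: interval_lebesgue_integrable_def set_integrable_def \<psi>_def[abs_def])
  qed
  have prod_eq: "(\<Prod>i\<in>UNIV. \<psi> i (x$i)) = (\<Prod>b\<in>Basis. \<psi> (idx b) (x \<bullet> b))" for x :: "real^'d"
    unfolding Basis_eq by (subst prod.reindex[OF inj]) (simp add: idx cart_eq_inner_axis)
  have meas_prod: "(\<lambda>x::real^'d. \<Prod>i\<in>UNIV. \<phi> i (x$i)) \<in> borel_measurable borel"
    by measurable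
  have "integral\<^sup>L (lebesgue_on (cube::(real^'d) set)) (\<lambda>x. \<Prod>i\<in>UNIV. \<phi> i (x$i))
      = integral\<^sup>L lebesgue (\<lambda>x. indicator cube x *\<^sub>R (\<Prod>i\<in>UNIV. \<phi> i (x$i)))"
    by (rule integral_restrict_space) (simp add: cube_sets_lebesgue)
  also have "\<dots> = integral\<^sup>L lborel (\<lambda>x. indicator cube x *\<^sub>R (\<Prod>i\<in>UNIV. \<phi> i (x$i)))"
  proof (rule integral_completion)
    have [measurable]: "cube \<in> sets (borel :: (real^'d) measure)" by (simp add: cube_open)
    note meas_prod[measurable]
    show "(\<lambda>x. indicator cube x *\<^sub>R (\<Prod>i\<in>UNIV. \<phi> i (x$i))) \<in> borel_measurable (lborel :: (real^'d) measure)"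
      by measurable
  qed
  also have "\<dots> = integral\<^sup>L lborel (\<lambda>x::real^'d. \<Prod>b\<in>Basis. \<psi> (idx b) (x \<bullet> b))"
  proof (intro Bochner_Integration.integral_cong refl)
    fix x :: "real^'d"
    have "indicator cube x *\<^sub>R (\<Prod>i\<in>UNIV. \<phi> i (x$i)) = (\<Prod>i\<in>UNIV. \<psi> i (x$i))"
      by (simp add: indicator_cube \<psi>_def prod.distrib)
    then show "indicator cube x *\<^sub>R (\<Prod>i\<in>UNIV. \<phi> i (x$i)) = (\<Prod>b\<in>Basis. \<psi> (idx b) (x \<bullet> b))"
      by (simp only: prod_eq)
  qed
  also have "\<dots> = (\<Prod>b\<in>Basis. integral\<^sup>L lborel (\<psi> (idx b)))"
    by (rule integral_lborel_prod) (auto intro: int_psi)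
  also have "\<dots> = (\<Prod>i\<in>UNIV. integral\<^sup>L lborel (\<psi> i))"
    unfolding Basis_eq by (subst prod.reindex[OF inj]) (simp add: idx)
  also have "\<dots> = (\<Prod>i\<in>UNIV. LBINT y=ereal 0..ereal pi. \<phi> i y)"
    by (simp add: interval_lebesgue_integral_def set_lebesgue_integral_def \<psi>_def[abs_def])
  finally show ?thesis .
qed

definition Nq :: "('d::finite \<Rightarrow> nat) \<Rightarrow> real" where
  "Nq q = (\<Prod>i\<in>UNIV. if q i = 0 then pi else pi/2)"

lemma Nq_pos: "Nq q > 0"
  unfolding Nq_def by (rule prod_pos) auto

lemma eq_continuous: "continuous_on UNIV (eq q)"
  unfolding eq_def[abs_def] by (intro continuous_intros)

lemma eq_bound: "\<bar>eq q x\<bar> \<le> 1"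
  unfolding eq_def abs_prod by (rule prod_le_1) auto

lemma gram:
  "integral\<^sup>L (lebesgue_on (cube::(real^'d::finite) set)) (\<lambda>x. eq q x * eq q' x) = (if q = q' then Nq q else 0)"
proof -
  have "integral\<^sup>L (lebesgue_on (cube::(real^'d) set)) (\<lambda>x. eq q x * eq q' x)
      = integral\<^sup>L (lebesgue_on (cube::(real^'d) set)) (\<lambda>x. \<Prod>i\<in>UNIV. cos (real (q i) * x$i) * cos (real (q' i) * x$i))"
    by (simp add: eq_def prod.distrib)
  also have "\<dots> = (\<Prod>i\<in>UNIV. LBINT y=ereal 0..ereal pi. cos (real (q i) * y) * cos (real (q' i) * y))"
    by (rule integral_cube_prod) (intro continuous_intros)
  also have "\<dots> = (\<Prod>i\<in>UNIV. if q i = q' i then (if q i = 0 then pi else pi/2) else 0)"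
    by (simp add: cos_cos_LBINT)
  also have "\<dots> = (if q = q' then Nq q else 0)"
  proof (cases "q = q'")
    case True then show ?thesis by (simp add: Nq_def)
  next
    case False
    then obtain i where i: "q i \<noteq> q' i" by auto
    have "(\<Prod>i\<in>UNIV. if q i = q' i then (if q i = 0 then pi else pi/2) else 0) = (0::real)"
      by (rule prod_zero[OF finite], rule bexI[of _ i]) (use i in auto)
    then show ?thesis using False by simp
  qed
  finally show ?thesis .
qed

abbreviation MC :: "(real^'d::finite) measure" where "MC \<equiv> lebesgue_on cube"

lemma cube_bounded: "bounded (cube :: (real^'d::finite) set)"
proof -
  have "cube \<subseteq> cbox 0 (\<chi> i. pi :: real^'d)"
    by (auto simp: cube_def mem_box_cart less_imp_le)
  then show ?thesis by (meson bounded_cbox bounded_subset)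
qed

lemma cube_lmeasurable: "(cube :: (real^'d::finite) set) \<in> lmeasurable"
  by (simp add: lmeasurable_open cube_bounded cube_open)

lemma fin_MC: "finite_measure (MC :: (real^'d::finite) measure)"
  by (rule finite_measure_lebesgue_on[OF cube_lmeasurable])

lemma eq_meas[measurable]: "eq q \<in> borel_measurable (MC :: (real^'d::finite) measure)"
  by (rule continuous_imp_measurable_on_sets_lebesgue[OF continuous_on_subset[OF eq_continuous]])
     (auto simp: cube_sets_lebesgue)

lemma L2_meas: "L2 g \<Longrightarrow> g \<in> borel_measurable (MC :: (real^'d::finite) measure)"
  by (simp add: L2_def)

lemma L2_sq_int: "L2 g \<Longrightarrow> integrable (MC :: (real^'d::finite) measure) (\<lambda>x. (g x)^2)"
  by (simp add: L2_def)

lemma L2_int: "L2 (g :: real^'d::finite \<Rightarrow> real) \<Longrightarrow> integrable MC g"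
proof -
  assume g: "L2 g"
  interpret finite_measure "MC :: (real^'d) measure" by (rule fin_MC)
  show ?thesis
  proof (rule Bochner_Integration.integrable_bound[where f="\<lambda>x. 1 + (g x)^2"])
    show "integrable MC (\<lambda>x. 1 + (g x)^2)" using L2_sq_int[OF g] by simp
    show "g \<in> borel_measurable MC" using L2_meas[OF g] .
    show "AE x in MC. norm (g x) \<le> norm (1 + (g x)^2)"
    proof (intro AE_I2)
      fix x
      have h0: "0 \<le> (\<bar>g x\<bar> - 1) * (\<bar>g x\<bar> - 1)" by simp
      have "\<bar>g x\<bar> \<le> 1 + (g x)^2"
        using h0 abs_ge_zero[of "g x"] by (simp add: power2_eq_square algebra_simps abs_mult_self_eq)
      then show "norm (g x) \<le> norm (1 + (g x)^2)" by simp
    qed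
  qed
qed

lemma L2_mult_bounded:
  assumes g: "L2 (g :: real^'d::finite \<Rightarrow> real)" and h: "h \<in> borel_measurable MC" and hb: "\<And>x. \<bar>h x\<bar> \<le> c"
  shows "integrable MC (\<lambda>x. g x * h x)"
proof (rule Bochner_Integration.integrable_bound[where f="\<lambda>x. c * g x"])
  show "integrable MC (\<lambda>x. c * g x)" using L2_int[OF g] by simp
  show "(\<lambda>x. g x * h x) \<in> borel_measurable MC" using L2_meas[OF g] h by measurable
  show "AE x in MC. norm (g x * h x) \<le> norm (c * g x)"
  proof (intro AE_I2)
    fix x
    have c: "0 \<le> c" using hb[of x] by simp
    have "\<bar>g x * h x\<bar> \<le> \<bar>c * g x\<bar>"
      using hb[of x] c mult_right_mono[of "\<bar>h x\<bar>" c "\<bar>g x\<bar>"] by (simp add: abs_mult mult.commute)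
    then show "norm (g x * h x) \<le> norm (c * g x)" by simp
  qed
qed

lemma eq_eq_int: "integrable (MC :: (real^'d::finite) measure) (\<lambda>x. eq q x * eq q' x)"
proof -
  interpret finite_measure "MC :: (real^'d) measure" by (rule fin_MC)
  show ?thesis
  proof (rule integrable_const_bound[where B=1])
    show "AE x in MC. norm (eq q x * eq q' x) \<le> 1"
      using eq_bound[of q] eq_bound[of q'] by (auto simp: abs_mult intro!: mult_le_one)
  qed measurable
qed

lemma coeff_int: "L2 g \<Longrightarrow> integrable MC (\<lambda>x. g x * eq q x)"
  by (rule L2_mult_bounded[OF _ eq_meas eq_bound])

lemma expand:
  fixes g :: "real^'d::finite \<Rightarrow> real"
  assumes g: "L2 g" and F: "finite F"
  shows "integral\<^sup>L MC (\<lambda>x. (g x - (\<Sum>q\<in>F. c q * eq q x))^2)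
       = integral\<^sup>L MC (\<lambda>x. (g x)^2) - 2 * (\<Sum>q\<in>F. c q * coeff g q) + (\<Sum>q\<in>F. (c q)^2 * Nq q)"
proof -
  have pt: "(g x - (\<Sum>q\<in>F. c q * eq q x))^2 =
     (g x)^2 - 2 * (\<Sum>q\<in>F. c q * (g x * eq q x)) + (\<Sum>q\<in>F. \<Sum>q'\<in>F. c q * c q' * (eq q x * eq q' x))" for x
  proof -
    have "(\<Sum>q\<in>F. c q * eq q x)^2 = (\<Sum>q\<in>F. \<Sum>q'\<in>F. c q * c q' * (eq q x * eq q' x))"
      by (simp add: power2_eq_square sum_product mult_ac)
    moreover have "g x * (\<Sum>q\<in>F. c q * eq q x) = (\<Sum>q\<in>F. c q * (g x * eq q x))"
      by (simp add: sum_distrib_left mult_ac)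
    ultimately show ?thesis by (simp add: power2_diff)
  qed
  have i1: "integrable MC (\<lambda>x. \<Sum>q\<in>F. c q * (g x * eq q x))"
    using coeff_int[OF g] by (intro Bochner_Integration.integrable_sum Bochner_Integration.integrable_mult_right) auto
  have i2: "integrable MC (\<lambda>x. \<Sum>q\<in>F. \<Sum>q'\<in>F. c q * c q' * (eq q x * eq q' x))"
    using eq_eq_int by (intro Bochner_Integration.integrable_sum Bochner_Integration.integrable_mult_right) auto
  have "integral\<^sup>L MC (\<lambda>x. (g x - (\<Sum>q\<in>F. c q * eq q x))^2)
      = integral\<^sup>L MC (\<lambda>x. (g x)^2 - 2 * (\<Sum>q\<in>F. c q * (g x * eq q x)) + (\<Sum>q\<in>F. \<Sum>q'\<in>F. c q * c q' * (eq q x * eq q' x)))"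
    by (simp only: pt)
  also have "\<dots> = integral\<^sup>L MC (\<lambda>x. (g x)^2) - 2 * integral\<^sup>L MC (\<lambda>x. \<Sum>q\<in>F. c q * (g x * eq q x))
       + integral\<^sup>L MC (\<lambda>x. \<Sum>q\<in>F. \<Sum>q'\<in>F. c q * c q' * (eq q x * eq q' x))"
    using L2_sq_int[OF g] i1 i2 by (simp add: Bochner_Integration.integral_add Bochner_Integration.integral_diff)
  also have "integral\<^sup>L MC (\<lambda>x. \<Sum>q\<in>F. c q * (g x * eq q x)) = (\<Sum>q\<in>F. c q * coeff g q)"
    by (subst Bochner_Integration.integral_sum, rule Bochner_Integration.integrable_mult_right, rule coeff_int[OF g])
       (simp add: coeff_def)
  also have "integral\<^sup>L MC (\<lambda>x. \<Sum>q\<in>F. \<Sum>q'\<in>F. c q * c q' * (eq q x * eq q' x))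
       = (\<Sum>q\<in>F. \<Sum>q'\<in>F. c q * c q' * (if q = q' then Nq q else 0))"
  proof -
    have ii: "integrable MC (\<lambda>x. \<Sum>q'\<in>F. c q * c q' * (eq q x * eq q' x))" for q
      using eq_eq_int by (intro Bochner_Integration.integrable_sum Bochner_Integration.integrable_mult_right) auto
    have "integral\<^sup>L MC (\<lambda>x. \<Sum>q\<in>F. \<Sum>q'\<in>F. c q * c q' * (eq q x * eq q' x))
        = (\<Sum>q\<in>F. integral\<^sup>L MC (\<lambda>x. \<Sum>q'\<in>F. c q * c q' * (eq q x * eq q' x)))"
      by (rule Bochner_Integration.integral_sum) (rule ii)
    also have "\<dots> = (\<Sum>q\<in>F. \<Sum>q'\<in>F. c q * c q' * integral\<^sup>L MC (\<lambda>x. eq q x * eq q' x))"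
    proof (rule sum.cong[OF refl])
      fix q
      show "integral\<^sup>L MC (\<lambda>x. \<Sum>q'\<in>F. c q * c q' * (eq q x * eq q' x)) = (\<Sum>q'\<in>F. c q * c q' * integral\<^sup>L MC (\<lambda>x. eq q x * eq q' x))"
        by (subst Bochner_Integration.integral_sum, rule Bochner_Integration.integrable_mult_right, rule eq_eq_int)
           simp
    qed
    finally show ?thesis by (simp only: gram)
  qed
  also have "\<dots> = (\<Sum>q\<in>F. (c q)^2 * Nq q)"
    using F by (simp add: power2_eq_square if_distrib sum.delta cong: if_cong)
  finally show ?thesis .
qed

definition trig :: "(real^'d::finite \<Rightarrow> real) \<Rightarrow> bool" where
  "trig p \<longleftrightarrow> (\<exists>F c. finite F \<and> p = (\<lambda>x. \<Sum>q\<in>F. c q * eq q x))"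

lemma trig_eq: "trig (eq q)"
  unfolding trig_def by (rule exI[of _ "{q}"], rule exI[of _ "\<lambda>_. 1"]) auto

lemma eq_zero: "eq (\<lambda>_. 0) x = 1"
  by (simp add: eq_def)

lemma trig_const: "trig (\<lambda>_. a)"
  unfolding trig_def by (rule exI[of _ "{\<lambda>_. 0}"], rule exI[of _ "\<lambda>_. a"]) (auto simp: eq_zero)

lemma trig_add:
  assumes "trig p" "trig p'" shows "trig (\<lambda>x. p x + p' x)"
proof -
  obtain F c where F: "finite F" "p = (\<lambda>x. \<Sum>q\<in>F. c q * eq q x)" using assms(1) by (auto simp: trig_def)
  obtain G d where G: "finite G" "p' = (\<lambda>x. \<Sum>q\<in>G. d q * eq q x)" using assms(2) by (auto simp: trig_def)
  define e where "e q = (if q \<in> F then c q else 0) + (if q \<in> G then d q else 0)" for q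
  have "(\<lambda>x. p x + p' x) = (\<lambda>x. \<Sum>q\<in>F \<union> G. e q * eq q x)"
  proof
    fix x
    have "(\<Sum>q\<in>F \<union> G. (if q \<in> F then c q * eq q x else 0)) = sum (\<lambda>q. c q * eq q x) ((F \<union> G) \<inter> F)"
      by (rule sum.inter_restrict[symmetric]) (simp add: F G)
    then have 1: "(\<Sum>q\<in>F \<union> G. (if q \<in> F then c q * eq q x else 0)) = (\<Sum>q\<in>F. c q * eq q x)"
      by (simp add: Int_absorb1)
    have "(\<Sum>q\<in>F \<union> G. (if q \<in> G then d q * eq q x else 0)) = sum (\<lambda>q. d q * eq q x) ((F \<union> G) \<inter> G)"
      by (rule sum.inter_restrict[symmetric]) (simp add: F G)
    then have 2: "(\<Sum>q\<in>F \<union> G. (if q \<in> G then d q * eq q x else 0)) = (\<Sum>q\<in>G. d q * eq q x)"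
      by (simp add: Int_absorb1)
    have 3: "e q * eq q x = (if q \<in> F then c q * eq q x else 0) + (if q \<in> G then d q * eq q x else 0)" for q
      by (simp add: e_def distrib_right)
    show "p x + p' x = (\<Sum>q\<in>F \<union> G. e q * eq q x)"
      unfolding F(2) G(2) 3 sum.distrib 1 2 ..
  qed
  then show ?thesis using F G unfolding trig_def by blast
qed

lemma trig_scale:
  assumes "trig p" shows "trig (\<lambda>x. a * p x)"
proof -
  obtain F c where F: "finite F" "p = (\<lambda>x. \<Sum>q\<in>F. c q * eq q x)" using assms(1) by (auto simp: trig_def)
  have "(\<lambda>x. a * p x) = (\<lambda>x. \<Sum>q\<in>F. (a * c q) * eq q x)"
    unfolding F(2) sum_distrib_left by (simp add: mult.assoc)
  then show ?thesis unfolding trig_def using F(1) by (intro exI[of _ F] exI[of _ "\<lambda>q. a * c q"]) simp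
qed

lemma trig_sum:
  assumes "finite A" "\<And>i. i \<in> A \<Longrightarrow> trig (f i)"
  shows "trig (\<lambda>x. \<Sum>i\<in>A. f i x)"
  using assms
proof (induction A rule: finite_induct)
  case empty then show ?case using trig_const[of 0] by simp
next
  case (insert a A)
  then show ?case by (simp add: trig_add)
qed

lemma trig_eq_mult:
  fixes q q' :: "'d::finite \<Rightarrow> nat"
  shows "trig (\<lambda>x. eq q x * eq q' x)"
proof -
  define A where "A i = q i + q' i" for i
  define B where "B i = (if q' i \<le> q i then q i - q' i else q' i - q i)" for i
  have cc: "cos (real (q i) * y) * cos (real (q' i) * y) = (1/2) * (cos (real (B i) * y) + cos (real (A i) * y))" for i y
  proof -
    have "cos (real (q i) * y - real (q' i) * y) = cos (real (B i) * y)"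
    proof (cases "q' i \<le> q i")
      case True then show ?thesis by (simp add: B_def of_nat_diff left_diff_distrib)
    next
      case False
      then have "cos (real (q i) * y - real (q' i) * y) = cos (- (real (q' i) * y - real (q i) * y))" by simp
      also have "\<dots> = cos (real (B i) * y)" using False by (simp only: cos_minus) (simp add: B_def of_nat_diff left_diff_distrib)
      finally show ?thesis .
    qed
    then show ?thesis by (simp add: cos_times_cos A_def distrib_right)
  qed
  have "(\<lambda>x. eq q x * eq q' x) = (\<lambda>x. (1/2)^CARD('d) * (\<Sum>X\<in>Pow UNIV. eq (\<lambda>i. if i \<in> X then B i else A i) x))"
  proof
    fix x :: "real^'d"
    have "eq q x * eq q' x = (\<Prod>i\<in>UNIV. (1/2) * (cos (real (B i) * x$i) + cos (real (A i) * x$i)))"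
      by (simp add: eq_def prod.distrib[symmetric] cc)
    also have "\<dots> = (1/2)^CARD('d) * (\<Prod>i\<in>UNIV. cos (real (B i) * x$i) + cos (real (A i) * x$i))"
      by (simp only: prod.distrib prod_constant)
    also have "(\<Prod>i\<in>UNIV. cos (real (B i) * x$i) + cos (real (A i) * x$i))
       = (\<Sum>X\<in>Pow UNIV. (\<Prod>i\<in>X. cos (real (B i) * x$i)) * (\<Prod>i\<in>UNIV - X. cos (real (A i) * x$i)))"
      by (rule prod_add) simp
    also have "\<dots> = (\<Sum>X\<in>Pow UNIV. eq (\<lambda>i. if i \<in> X then B i else A i) x)"
    proof (rule sum.cong[OF refl])
      fix X :: "'d set"
      show "(\<Prod>i\<in>X. cos (real (B i) * x$i)) * (\<Prod>i\<in>UNIV - X. cos (real (A i) * x$i)) = eq (\<lambda>i. if i \<in> X then B i else A i) x"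
      proof -
        have "(\<Prod>i\<in>UNIV. cos (real (if i \<in> X then B i else A i) * x$i)) = (\<Prod>i\<in>UNIV. if i \<in> X then cos (real (B i) * x$i) else cos (real (A i) * x$i))"
          by (intro prod.cong) auto
        also have "\<dots> = (\<Prod>i\<in>UNIV \<inter> {i. i \<in> X}. cos (real (B i) * x$i)) * (\<Prod>i\<in>UNIV \<inter> - {i. i \<in> X}. cos (real (A i) * x$i))"
          by (rule prod.If_cases) simp
        also have "\<dots> = (\<Prod>i\<in>X. cos (real (B i) * x$i)) * (\<Prod>i\<in>UNIV - X. cos (real (A i) * x$i))"
          by (simp add: Compl_eq_Diff_UNIV)
        finally show ?thesis by (simp add: eq_def)
      qed
    qed
    finally show "eq q x * eq q' x = (1/2)^CARD('d) * (\<Sum>X\<in>Pow UNIV. eq (\<lambda>i. if i \<in> X then B i else A i) x)" .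
  qed
  moreover have "trig (\<lambda>x. (1/2)^CARD('d) * (\<Sum>X\<in>Pow (UNIV::'d set). eq (\<lambda>i. if i \<in> X then B i else A i) x))"
    by (intro trig_scale trig_sum) (auto intro: trig_eq)
  ultimately show ?thesis by simp
qed

lemma trig_mult:
  assumes "trig p" "trig p'" shows "trig (\<lambda>x. p x * p' x)"
proof -
  obtain F c where F: "finite F" "p = (\<lambda>x. \<Sum>q\<in>F. c q * eq q x)" using assms(1) by (auto simp: trig_def)
  obtain G d where G: "finite G" "p' = (\<lambda>x. \<Sum>q\<in>G. d q * eq q x)" using assms(2) by (auto simp: trig_def)
  have "(\<lambda>x. p x * p' x) = (\<lambda>x. \<Sum>q\<in>F. \<Sum>q'\<in>G. (c q * d q') * (eq q x * eq q' x))"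
    unfolding F(2) G(2) by (simp add: sum_product mult_ac)
  moreover have "trig (\<lambda>x. \<Sum>q\<in>F. \<Sum>q'\<in>G. (c q * d q') * (eq q x * eq q' x))"
    using F G by (intro trig_sum trig_scale trig_eq_mult) auto
  ultimately show ?thesis by simp
qed

lemma trig_cont: "trig p \<Longrightarrow> continuous_on S p"
proof -
  assume "trig p"
  then obtain F c where F: "finite F" "p = (\<lambda>x. \<Sum>q\<in>F. c q * eq q x)" by (auto simp: trig_def)
  have "continuous_on S (eq q)" for q by (rule continuous_on_subset[OF eq_continuous]) simp
  then have "continuous_on S (\<lambda>x. \<Sum>q\<in>F. c q * eq q x)"
    by (intro continuous_on_sum continuous_on_mult continuous_on_const) auto
  then show ?thesis using F by simp
qed

lemma eq_axis: "eq (\<lambda>j. if j = i then 1 else 0) x = cos (x$i)"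
proof -
  have "eq (\<lambda>j. if j = i then 1 else 0) x = (\<Prod>j\<in>UNIV. if j = i then cos (x$i) else 1)"
    unfolding eq_def by (intro prod.cong refl) auto
  also have "\<dots> = cos (x$i)" by (simp add: prod.delta)
  finally show ?thesis .
qed

lemma trig_approx:
  fixes h :: "real^'d::finite \<Rightarrow> real"
  assumes h: "continuous_on (cbox 0 (\<chi> i. pi)) h" and e: "e > 0"
  shows "\<exists>p. trig p \<and> (\<forall>x\<in>cbox 0 (\<chi> i. pi). \<bar>h x - p x\<bar> < e)"
proof -
  interpret function_ring_on "Collect trig" "cbox 0 (\<chi> i. pi :: real^'d)"
  proof unfold_locales
    show "compact (cbox 0 (\<chi> i. pi :: real^'d))" by simp
  next
    fix f :: "real^'d \<Rightarrow> real" assume "f \<in> Collect trig" then show "continuous_on (cbox 0 (\<chi> i. pi)) f" by (simp add: trig_cont)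
  next
    fix f g :: "real^'d \<Rightarrow> real" assume "f \<in> Collect trig" "g \<in> Collect trig"
    then show "(\<lambda>x. f x + g x) \<in> Collect trig" "(\<lambda>x. f x * g x) \<in> Collect trig"
      by (simp_all add: trig_add trig_mult)
  next
    fix c show "(\<lambda>_. c) \<in> Collect trig" by (simp add: trig_const)
  next
    fix x y :: "real^'d"
    assume x: "x \<in> cbox 0 (\<chi> i. pi)" and y: "y \<in> cbox 0 (\<chi> i. pi)" and xy: "x \<noteq> y"
    from xy obtain i where i: "x$i \<noteq> y$i" by (metis vec_eq_iff)
    have "0 \<le> x$i" "x$i \<le> pi" "0 \<le> y$i" "y$i \<le> pi" using x y by (auto simp: mem_box_cart)
    then have "cos (x$i) \<noteq> cos (y$i)" using i cos_inj_pi by blast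
    then show "\<exists>f\<in>Collect trig. f x \<noteq> f y"
      by (intro bexI[of _ "eq (\<lambda>j. if j = i then 1 else 0)"]) (auto simp: eq_axis trig_eq)
  qed
  obtain F where F: "F \<in> UNIV \<rightarrow> Collect trig" and lim: "uniform_limit (cbox 0 (\<chi> i. pi)) F h sequentially"
    using Stone_Weierstrass[OF h] by blast
  from uniform_limitD[OF lim e] obtain n where "\<forall>x\<in>cbox 0 (\<chi> i. pi). dist (F n x) (h x) < e"
    by (auto simp: eventually_sequentially)
  then show ?thesis using F by (intro exI[of _ "F n"]) (auto simp: dist_real_def abs_minus_commute)
qed

lemma sq_int_nonneg: "0 \<le> integral\<^sup>L (MC :: (real^'d::finite) measure) (\<lambda>x. (f x :: real)^2)"
  by (rule Bochner_Integration.integral_nonneg) simp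

lemma bessel:
  fixes g :: "real^'d::finite \<Rightarrow> real"
  assumes g: "L2 g" and F: "finite F"
  shows "(\<Sum>q\<in>F. (coeff g q)^2 / Nq q) \<le> integral\<^sup>L MC (\<lambda>x. (g x)^2)"
proof -
  define c where "c q = coeff g q / Nq q" for q
  have N: "Nq q > 0" for q :: "'d \<Rightarrow> nat" by (rule Nq_pos)
  have e: "integral\<^sup>L MC (\<lambda>x. (g x - (\<Sum>q\<in>F. c q * eq q x))^2)
       = integral\<^sup>L MC (\<lambda>x. (g x)^2) - 2 * (\<Sum>q\<in>F. c q * coeff g q) + (\<Sum>q\<in>F. (c q)^2 * Nq q)"
    by (rule expand[OF g F])
  have 1: "(\<Sum>q\<in>F. c q * coeff g q) = (\<Sum>q\<in>F. (coeff g q)^2 / Nq q)"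
    by (simp add: c_def power2_eq_square)
  have 2: "(\<Sum>q\<in>F. (c q)^2 * Nq q) = (\<Sum>q\<in>F. (coeff g q)^2 / Nq q)"
    by (intro sum.cong refl) (use N in \<open>simp add: c_def power2_eq_square field_simps\<close>)
  show ?thesis using e 1 2 sq_int_nonneg[of "\<lambda>x. g x - (\<Sum>q\<in>F. c q * eq q x)"] by linarith
qed

lemma approx_bound:
  fixes g :: "real^'d::finite \<Rightarrow> real"
  assumes g: "L2 g" and F: "finite F"
  shows "integral\<^sup>L MC (\<lambda>x. (g x)^2) \<le> (\<Sum>q\<in>F. (coeff g q)^2 / Nq q)
           + integral\<^sup>L MC (\<lambda>x. (g x - (\<Sum>q\<in>F. c q * eq q x))^2)"
proof -
  have N: "Nq q > 0" for q :: "'d \<Rightarrow> nat" by (rule Nq_pos)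
  have e: "integral\<^sup>L MC (\<lambda>x. (g x - (\<Sum>q\<in>F. c q * eq q x))^2)
       = integral\<^sup>L MC (\<lambda>x. (g x)^2) - 2 * (\<Sum>q\<in>F. c q * coeff g q) + (\<Sum>q\<in>F. (c q)^2 * Nq q)"
    by (rule expand[OF g F])
  have pt: "2 * (c q * coeff g q) - (c q)^2 * Nq q \<le> (coeff g q)^2 / Nq q" for q
  proof -
    have "0 \<le> (coeff g q - c q * Nq q)^2 / Nq q" using N[of q] by simp
    also have "(coeff g q - c q * Nq q)^2 / Nq q = (coeff g q)^2 / Nq q - (2 * (c q * coeff g q) - (c q)^2 * Nq q)"
      using N[of q] by (simp add: power2_eq_square field_simps)
    finally show ?thesis by simp
  qed
  have "(\<Sum>q\<in>F. 2 * (c q * coeff g q) - (c q)^2 * Nq q) \<le> (\<Sum>q\<in>F. (coeff g q)^2 / Nq q)"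
    by (rule sum_mono) (rule pt)
  then have "2 * (\<Sum>q\<in>F. c q * coeff g q) - (\<Sum>q\<in>F. (c q)^2 * Nq q) \<le> (\<Sum>q\<in>F. (coeff g q)^2 / Nq q)"
    by (simp add: sum_subtractf sum_distrib_left)
  then show ?thesis using e by linarith
qed

lemma L2_bounded:
  assumes f: "f \<in> borel_measurable (MC :: (real^'d::finite) measure)" and b: "\<And>x. \<bar>f x\<bar> \<le> B"
  shows "L2 f"
proof -
  interpret finite_measure "MC :: (real^'d) measure" by (rule fin_MC)
  have "integrable MC (\<lambda>x. (f x)^2)"
  proof (rule integrable_const_bound[where B="B^2"])
    show "AE x in MC. norm ((f x)^2) \<le> B^2"
    proof (intro AE_I2)
      fix x
      have "\<bar>f x\<bar>^2 \<le> B^2" using b[of x] by (intro power_mono) auto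
      then show "norm ((f x)^2) \<le> B^2" by simp
    qed
  qed (use f in measurable)
  then show ?thesis using f by (simp add: L2_def)
qed

lemma L2_diff:
  assumes g: "L2 g" and h: "L2 h"
  shows "L2 (\<lambda>x. g x - h x :: real)"
  unfolding L2_def
proof
  show "(\<lambda>x. g x - h x) \<in> borel_measurable MC" using L2_meas[OF g] L2_meas[OF h] by measurable
  show "integrable MC (\<lambda>x. (g x - h x)^2)"
  proof (rule Bochner_Integration.integrable_bound[where f="\<lambda>x. 2 * (g x)^2 + 2 * (h x)^2"])
    show "integrable MC (\<lambda>x. 2 * (g x)^2 + 2 * (h x)^2)"
      using L2_sq_int[OF g] L2_sq_int[OF h] by simp
    show "(\<lambda>x. (g x - h x)^2) \<in> borel_measurable MC" using L2_meas[OF g] L2_meas[OF h] by measurable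
    show "AE x in MC. norm ((g x - h x)^2) \<le> norm (2 * (g x)^2 + 2 * (h x)^2)"
    proof (intro AE_I2)
      fix x
      have "0 \<le> (g x + h x)^2" by simp
      then have "(g x - h x)^2 \<le> 2 * (g x)^2 + 2 * (h x)^2" by (simp add: power2_eq_square algebra_simps)
      then show "norm ((g x - h x)^2) \<le> norm (2 * (g x)^2 + 2 * (h x)^2)" by simp
    qed
  qed
qed

lemma L2_tri:
  assumes g: "L2 g" and h: "L2 h" and p: "L2 p"
  shows "integral\<^sup>L MC (\<lambda>x. (g x - p x)^2) \<le> 2 * integral\<^sup>L MC (\<lambda>x. (g x - h x)^2) + 2 * integral\<^sup>L MC (\<lambda>x. (h x - p x)^2)"
proof -
  have "integral\<^sup>L MC (\<lambda>x. (g x - p x)^2) \<le> integral\<^sup>L MC (\<lambda>x. 2 * (g x - h x)^2 + 2 * (h x - p x)^2)"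
  proof (rule integral_mono)
    show "integrable MC (\<lambda>x. (g x - p x)^2)" using L2_diff[OF g p] by (simp add: L2_def)
    show "integrable MC (\<lambda>x. 2 * (g x - h x)^2 + 2 * (h x - p x)^2)"
      using L2_diff[OF g h] L2_diff[OF h p] by (simp add: L2_def)
    fix x
    have "0 \<le> (g x - 2 * h x + p x)^2" by simp
    then show "(g x - p x)^2 \<le> 2 * (g x - h x)^2 + 2 * (h x - p x)^2"
      by (simp add: power2_eq_square algebra_simps)
  qed
  also have "\<dots> = 2 * integral\<^sup>L MC (\<lambda>x. (g x - h x)^2) + 2 * integral\<^sup>L MC (\<lambda>x. (h x - p x)^2)"
    using L2_diff[OF g h] L2_diff[OF h p] by (simp add: L2_def)
  finally show ?thesis .
qed

lemma trig_bounded: "trig p \<Longrightarrow> \<exists>B. \<forall>x. \<bar>p x\<bar> \<le> B"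
proof -
  assume "trig p"
  then obtain F c where F: "finite F" "p = (\<lambda>x. \<Sum>q\<in>F. c q * eq q x)" by (auto simp: trig_def)
  have "\<bar>p x\<bar> \<le> (\<Sum>q\<in>F. \<bar>c q\<bar>)" for x
  proof -
    have "\<bar>p x\<bar> \<le> (\<Sum>q\<in>F. \<bar>c q * eq q x\<bar>)" unfolding F(2) by (rule sum_abs)
    also have "\<dots> \<le> (\<Sum>q\<in>F. \<bar>c q\<bar>)"
      by (intro sum_mono) (simp add: abs_mult mult_left_le eq_bound)
    finally show ?thesis .
  qed
  then show ?thesis by blast
qed

lemma cont_meas: "continuous_on UNIV h \<Longrightarrow> h \<in> borel_measurable (MC :: (real^'d::finite) measure)"
  by (rule continuous_imp_measurable_on_sets_lebesgue[OF continuous_on_subset]) (auto simp: cube_sets_lebesgue)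

lemma trig_L2: "trig (p :: real^'d::finite \<Rightarrow> real) \<Longrightarrow> L2 p"
  using trig_bounded[of p] by (metis L2_bounded cont_meas trig_cont)

definition tr :: "real \<Rightarrow> real \<Rightarrow> real" where "tr M y = max (- M) (min M y)"

lemma tr_bound: "0 \<le> M \<Longrightarrow> \<bar>tr M y\<bar> \<le> M"
  by (simp add: tr_def)

lemma tr_diff: "0 \<le> M \<Longrightarrow> \<bar>y - tr M y\<bar> \<le> \<bar>y\<bar>"
  by (simp add: tr_def)

lemma tr_id: "\<bar>y\<bar> \<le> M \<Longrightarrow> tr M y = y"
  by (simp add: tr_def)

lemma tr_cont: "continuous_on UNIV (tr M)"
  unfolding tr_def[abs_def] by (intro continuous_intros)

lemma cont_approx:
  fixes g :: "real^'d::finite \<Rightarrow> real"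
  assumes g: "L2 g" and e: "e > 0"
  shows "\<exists>h B. continuous_on UNIV h \<and> (\<forall>x. \<bar>h x\<bar> \<le> B) \<and> integral\<^sup>L MC (\<lambda>x. (g x - h x)^2) < e"
proof -
  interpret finite_measure "MC :: (real^'d) measure" by (rule fin_MC)
  have gm[measurable]: "g \<in> borel_measurable MC" using L2_meas[OF g] .
  have "g measurable_on cube"
    using gm measurable_on_iff_borel_measurable[OF cube_sets_lebesgue] by blast
  then obtain N gs where N: "negligible N" and gsc: "\<And>n. continuous_on UNIV (gs n)"
    and gsl: "\<And>x. x \<notin> N \<Longrightarrow> (\<lambda>n. gs n x) \<longlonglongrightarrow> (if x \<in> cube then g x else 0)"
    unfolding measurable_on_def by blast
  have trm[measurable]: "tr M \<in> borel_measurable borel" for M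
    using tr_cont by (rule borel_measurable_continuous_onI)
  define s where "s n x = (g x - tr (real n) (g x))^2" for n x
  have "(\<lambda>n. integral\<^sup>L MC (s n)) \<longlonglongrightarrow> integral\<^sup>L MC (\<lambda>x::real^'d. 0)"
  proof (rule Bochner_Integration.integral_dominated_convergence[where w="\<lambda>x. (g x)^2"])
    show "(\<lambda>x::real^'d. 0::real) \<in> borel_measurable MC" by simp
    show "s n \<in> borel_measurable MC" for n unfolding s_def by measurable
    show "integrable MC (\<lambda>x. (g x)^2)" using L2_sq_int[OF g] .
    show "AE x in MC. (\<lambda>n. s n x) \<longlonglongrightarrow> 0"
    proof (intro AE_I2 tendsto_eventually)
      fix x
      show "\<forall>\<^sub>F n in sequentially. s n x = 0"
        unfolding eventually_sequentially
      proof (intro exI[of _ "nat \<lceil>\<bar>g x\<bar>\<rceil>"] allI impI)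
        fix n assume "nat \<lceil>\<bar>g x\<bar>\<rceil> \<le> n"
        then have "\<bar>g x\<bar> \<le> real n" by linarith
        then show "s n x = 0" by (simp add: s_def tr_id)
      qed
    qed
    show "AE x in MC. norm (s n x) \<le> (g x)^2" for n
    proof (intro AE_I2)
      fix x
      have "\<bar>g x - tr (real n) (g x)\<bar>^2 \<le> \<bar>g x\<bar>^2"
        by (intro power_mono tr_diff) auto
      then show "norm (s n x) \<le> (g x)^2" by (simp add: s_def)
    qed
  qed
  then have "(\<lambda>n. integral\<^sup>L MC (s n)) \<longlonglongrightarrow> 0" by simp
  from order_tendstoD(2)[OF this, of "e/4"] e obtain n0 where n0: "integral\<^sup>L MC (s n0) < e/4"
    by (auto simp: eventually_sequentially)
  define M where "M = real n0"
  have M0: "0 \<le> M" by (simp add: M_def)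
  define s2 where "s2 n x = (tr M (g x) - tr M (gs n x))^2" for n x
  have AEN: "AE x in MC. x \<notin> N"
  proof -
    have "AE x in lebesgue. x \<notin> N"
      using N by (intro AE_not_in) (simp add: negligible_iff_null_sets)
    then show ?thesis
      by (subst AE_restrict_space_iff) (auto simp: cube_sets_lebesgue elim: AE_mp)
  qed
  have gsm[measurable]: "gs n \<in> borel_measurable MC" for n using gsc by (rule cont_meas)
  have "(\<lambda>n. integral\<^sup>L MC (s2 n)) \<longlonglongrightarrow> integral\<^sup>L MC (\<lambda>x::real^'d. 0)"
  proof (rule Bochner_Integration.integral_dominated_convergence[where w="\<lambda>x. (2*M)^2"])
    show "(\<lambda>x::real^'d. 0::real) \<in> borel_measurable MC" by simp
    show "s2 n \<in> borel_measurable MC" for n unfolding s2_def by measurable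
    show "integrable MC (\<lambda>x::real^'d. (2*M)^2)" by simp
    show "AE x in MC. (\<lambda>n. s2 n x) \<longlonglongrightarrow> 0"
      using AEN
    proof (rule AE_mp)
      show "AE x in MC. x \<notin> N \<longrightarrow> (\<lambda>n. s2 n x) \<longlonglongrightarrow> 0"
      proof (intro AE_I2 impI)
        fix x assume x: "x \<in> space MC" "x \<notin> N"
        then have xc: "x \<in> cube" by simp
        have "(\<lambda>n. gs n x) \<longlonglongrightarrow> g x" using gsl[OF x(2)] xc by simp
        then have "(\<lambda>n. tr M (gs n x)) \<longlonglongrightarrow> tr M (g x)"
          using tr_cont continuous_on_tendsto_compose[of UNIV "tr M"] by auto
        then have "(\<lambda>n. (tr M (g x) - tr M (gs n x))^2) \<longlonglongrightarrow> (tr M (g x) - tr M (g x))^2"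
          by (intro tendsto_intros)
        then show "(\<lambda>n. s2 n x) \<longlonglongrightarrow> 0" by (simp add: s2_def)
      qed
    qed
    show "AE x in MC. norm (s2 n x) \<le> (2*M)^2" for n
    proof (intro AE_I2)
      fix x
      have "\<bar>tr M (g x) - tr M (gs n x)\<bar> \<le> 2*M"
        using tr_bound[OF M0, of "g x"] tr_bound[OF M0, of "gs n x"] by linarith
      then have "\<bar>tr M (g x) - tr M (gs n x)\<bar>^2 \<le> (2*M)^2"
        by (intro power_mono) auto
      then show "norm (s2 n x) \<le> (2*M)^2" by (simp add: s2_def)
    qed
  qed
  then have "(\<lambda>n. integral\<^sup>L MC (s2 n)) \<longlonglongrightarrow> 0" by simp
  from order_tendstoD(2)[OF this, of "e/4"] e obtain n1 where n1: "integral\<^sup>L MC (s2 n1) < e/4"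
    by (auto simp: eventually_sequentially)
  define h where "h x = tr M (gs n1 x)" for x
  have hc: "continuous_on UNIV h"
    unfolding h_def using continuous_on_compose[OF gsc[of n1] continuous_on_subset[OF tr_cont]]
    by (simp add: comp_def)
  have hb: "\<bar>h x\<bar> \<le> M" for x unfolding h_def by (rule tr_bound[OF M0])
  have L2h: "L2 h" by (rule L2_bounded[OF cont_meas[OF hc] hb])
  have L2t: "L2 (\<lambda>x. tr M (g x))" by (rule L2_bounded[OF _ tr_bound[OF M0]]) measurable
  have "integral\<^sup>L MC (\<lambda>x. (g x - h x)^2) \<le> 2 * integral\<^sup>L MC (\<lambda>x. (g x - tr M (g x))^2) + 2 * integral\<^sup>L MC (\<lambda>x. (tr M (g x) - h x)^2)"
    by (rule L2_tri[OF g L2t L2h])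
  also have "\<dots> < e"
  proof -
    have "integral\<^sup>L MC (s n0) = integral\<^sup>L MC (\<lambda>x. (g x - tr M (g x))^2)"
      by (simp add: s_def[abs_def] M_def)
    moreover have "integral\<^sup>L MC (s2 n1) = integral\<^sup>L MC (\<lambda>x. (tr M (g x) - h x)^2)"
      by (simp add: s2_def[abs_def] h_def)
    ultimately show ?thesis using n0 n1 by linarith
  qed
  finally show ?thesis using hc hb by blast
qed

lemma density:
  fixes g :: "real^'d::finite \<Rightarrow> real"
  assumes g: "L2 g" and e: "e > 0"
  shows "\<exists>F c. finite F \<and> integral\<^sup>L MC (\<lambda>x. (g x - (\<Sum>q\<in>F. c q * eq q x))^2) < e"
proof -
  interpret finite_measure "MC :: (real^'d) measure" by (rule fin_MC)
  obtain h B where hc: "continuous_on UNIV h" and hb: "\<And>x. \<bar>h x\<bar> \<le> B"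
    and hg: "integral\<^sup>L MC (\<lambda>x. (g x - h x)^2) < e/4"
    using cont_approx[OF g, of "e/4"] e by auto
  define V where "V = measure (MC :: (real^'d) measure) (space MC)"
  have V0: "0 \<le> V" by (simp add: V_def)
  define \<delta> where "\<delta> = sqrt (e / (4 * (V + 1)))"
  have d0: "\<delta> > 0" unfolding \<delta>_def using e V0 by simp
  have dsq: "\<delta>^2 = e / (4 * (V + 1))" unfolding \<delta>_def using e V0 by simp
  obtain p where p: "trig p" and hp: "\<And>x. x \<in> cbox 0 (\<chi> i. pi) \<Longrightarrow> \<bar>h x - p x\<bar> < \<delta>"
    using trig_approx[OF continuous_on_subset[OF hc] d0] by auto
  have L2h: "L2 h" by (rule L2_bounded[OF cont_meas[OF hc] hb])
  have L2p: "L2 p" by (rule trig_L2[OF p])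
  have "integral\<^sup>L MC (\<lambda>x. (h x - p x)^2) \<le> integral\<^sup>L MC (\<lambda>x::real^'d. \<delta>^2)"
  proof (rule Bochner_Integration.integral_mono)
    show "integrable MC (\<lambda>x. (h x - p x)^2)" using L2_diff[OF L2h L2p] by (simp add: L2_def)
    show "integrable MC (\<lambda>x::real^'d. \<delta>^2)" by simp
    fix x :: "real^'d" assume "x \<in> space MC"
    then have "x \<in> cbox 0 (\<chi> i. pi)" by (auto simp: cube_def mem_box_cart less_imp_le)
    then have "\<bar>h x - p x\<bar> < \<delta>" by (rule hp)
    then have "\<bar>h x - p x\<bar>^2 \<le> \<delta>^2" by (intro power_mono) auto
    then show "(h x - p x)^2 \<le> \<delta>^2" by simp
  qed
  also have "\<dots> = V * \<delta>^2" by (simp add: V_def)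
  also have "\<dots> < e / 4"
  proof -
    have "V * \<delta>^2 = e * V / (4 * (V + 1))" using dsq by simp
    also have "\<dots> < e / 4" using e V0 by (simp add: field_simps)
    finally show ?thesis .
  qed
  finally have hp2: "integral\<^sup>L MC (\<lambda>x. (h x - p x)^2) < e/4" .
  have "integral\<^sup>L MC (\<lambda>x. (g x - p x)^2) \<le> 2 * integral\<^sup>L MC (\<lambda>x. (g x - h x)^2) + 2 * integral\<^sup>L MC (\<lambda>x. (h x - p x)^2)"
    by (rule L2_tri[OF g L2h L2p])
  also have "\<dots> < e" using hg hp2 by simp
  finally have "integral\<^sup>L MC (\<lambda>x. (g x - p x)^2) < e" .
  moreover obtain F c where "finite F" "p = (\<lambda>x. \<Sum>q\<in>F. c q * eq q x)" using p by (auto simp: trig_def)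
  ultimately show ?thesis by auto
qed

lemma de_bound:
  fixes s x t E :: real
  assumes s: "s > 0" and x: "x \<ge> 0" and t: "t \<ge> 0" and E: "E > 0"
  shows "E * exp (- x * t) * (1 - exp (- s * t)) / s \<le> 2 * E / (s + x)"
proof (cases "x \<le> s")
  case True
  have "exp (- x * t) \<le> 1" using x t by (simp add: mult_nonneg_nonneg)
  moreover have "1 - exp (- s * t) \<le> 1" by simp
  moreover have "0 \<le> 1 - exp (- s * t)" using s t by (simp add: mult_nonneg_nonneg)
  ultimately have "exp (- x * t) * (1 - exp (- s * t)) \<le> 1"
    by (metis mult_le_one exp_ge_zero)
  then have "E * (exp (- x * t) * (1 - exp (- s * t))) \<le> E * 1"
    using E by (intro mult_left_mono) auto
  then have "E * exp (- x * t) * (1 - exp (- s * t)) \<le> E"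
    by (simp add: mult.assoc)
  then have "E * exp (- x * t) * (1 - exp (- s * t)) / s \<le> E / s"
    using s by (simp add: divide_right_mono)
  also have "E / s \<le> 2 * E / (s + x)"
    using True s x E by (simp add: field_simps)
  finally show ?thesis .
next
  case False
  then have x0: "x > 0" using s by simp
  have 1: "1 - exp (- s * t) \<le> s * t"
    using exp_ge_add_one_self[of "- s * t"] by simp
  have 2: "exp (- x * t) * t \<le> 1 / x"
  proof -
    have "x * t < exp (x * t)"
      using exp_ge_add_one_self[of "x * t"] by linarith
    then have "x * t * exp (- x * t) \<le> 1"
      by (simp add: exp_minus field_simps)
    then show ?thesis using x0 by (simp add: field_simps)
  qed
  have "E * exp (- x * t) * (1 - exp (- s * t)) \<le> E * exp (- x * t) * (s * t)"
    using 1 E by (intro mult_left_mono) auto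
  also have "\<dots> = E * s * (exp (- x * t) * t)" by simp
  also have "\<dots> \<le> E * s * (1 / x)"
    using 2 E s by (intro mult_left_mono) auto
  finally have "E * exp (- x * t) * (1 - exp (- s * t)) / s \<le> E / x"
    using s by (simp add: field_simps)
  also have "E / x \<le> 2 * E / (s + x)"
    using False s x0 E by (simp add: field_simps)
  finally show ?thesis .
qed

lemma mode_bound:
  fixes mu chi D f k U Q t L wm wp B C s lm lp a0 b0 :: real
  assumes pos: "mu > 0" "chi > 0" "D > 0" "f > 0" "k > 0" "U > 0" and Q: "Q \<ge> 0" and t: "t \<ge> 0"
    and B: "B = Q*(mu+D)+k" and C: "C = Q*(mu*(D*Q+k) - chi*U*f)" and s: "s = sqrt (B^2 - 4*C)"
    and lm: "lm = (-B - s)/2" and lp: "lp = (-B + s)/2" and L: "lp \<le> L" "0 \<le> L"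
    and a0: "a0 = wm * ((lm + D*Q + k)/f) + wp * ((lp + D*Q + k)/f)" and b0: "b0 = wm + wp"
  defines "K0 \<equiv> 5 + 8*chi*U*f/((mu+D)*k) + 4*chi*U/(mu+D) + 4*f/k"
  shows "\<bar>wm * ((lm + D*Q + k)/f) * exp (lm*t) + wp * ((lp + D*Q + k)/f) * exp (lp*t)\<bar> \<le> K0 * exp (L*t) * (\<bar>a0\<bar> + \<bar>b0\<bar>)"
    and "\<bar>wm * exp (lm*t) + wp * exp (lp*t)\<bar> \<le> K0 * exp (L*t) * (\<bar>a0\<bar> + \<bar>b0\<bar>)"
proof -
  define b where "b = D*Q + k"
  define m where "m = 2*chi*U*f/(mu+D)"
  have muD: "mu + D > 0" using pos by simp
  have b0': "b > 0" using pos Q by (simp add: b_def add_nonneg_pos)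
  have Bb: "B = mu*Q + b" by (simp add: B b_def algebra_simps)
  have Bk: "k \<le> B" using pos Q by (simp add: B)
  have Bpos: "B > 0" using Bk pos by simp
  have QB: "Q*(mu+D) \<le> B" using pos by (simp add: B)
  have m0: "m \<ge> 0" using pos muD by (simp add: m_def)
  have disc: "B^2 - 4*C = (mu*Q - b)^2 + 4*(Q*chi*U*f)"
    by (simp add: Bb C b_def power2_eq_square algebra_simps)
  have QcUf: "Q*chi*U*f \<ge> 0" using pos Q by simp
  have dpos: "B^2 - 4*C > 0"
  proof (cases "Q = 0")
    case True then show ?thesis using disc pos by (simp add: b_def)
  next
    case False then have "Q*chi*U*f > 0" using pos Q by simp
    then show ?thesis using disc by (smt (verit) zero_le_power2)
  qed
  have spos: "s > 0" using dpos s by simp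
  have ssq: "s^2 = (mu*Q - b)^2 + 4*(Q*chi*U*f)" using dpos s disc by simp
  have sB: "s \<le> B + m"
  proof -
    have "4*(Q*chi*U*f) \<le> 2*m*B"
    proof -
      have "4*(Q*chi*U*f) = 4*chi*U*f*(Q*(mu+D))/(mu+D)" using muD by (simp add: field_simps)
      also have "\<dots> \<le> 4*chi*U*f*B/(mu+D)"
        using QB pos muD by (intro divide_right_mono mult_left_mono) auto
      also have "\<dots> = 2*m*B" by (simp add: m_def)
      finally show ?thesis .
    qed
    have "(mu*Q - b)^2 \<le> B^2"
    proof -
      have "\<bar>mu*Q - b\<bar> \<le> B" using Bb b0' pos Q by (simp add: abs_le_iff)
      then have "\<bar>mu*Q - b\<bar>^2 \<le> B^2" by (intro power_mono) auto
      then show ?thesis by simp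
    qed
    then have "s^2 \<le> B^2 + 2*m*B" using ssq \<open>4*(Q*chi*U*f) \<le> 2*m*B\<close> by linarith
    also have "\<dots> \<le> (B + m)^2" using zero_le_power2[of m] by (simp add: power2_sum)
    finally have "s^2 \<le> (B + m)^2" .
    moreover have "0 \<le> B + m" using Bpos m0 by simp
    ultimately show ?thesis by (rule power2_le_imp_le)
  qed
  have lpb: "lp + b = (s + b - mu*Q)/2" using lp Bb by simp
  have lmb: "lm + b = (- s + b - mu*Q)/2" using lm Bb by simp
  have babs: "\<bar>b - mu*Q\<bar> \<le> B" using Bb b0' pos Q by (simp add: abs_le_iff)
  have hp: "\<bar>lp + b\<bar> \<le> B + m" using lpb babs sB spos m0 by (simp add: abs_le_iff; linarith)
  have hm: "\<bar>lm + b\<bar> \<le> B + m" using lmb babs sB spos m0 by (simp add: abs_le_iff; linarith)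
  have prod: "(lp + b) * (lm + b) = - (Q*chi*U*f)"
  proof -
    have "(lp + b) * (lm + b) = ((b - mu*Q)^2 - s^2)/4" unfolding lpb lmb by (simp add: power2_eq_square algebra_simps)
    also have "\<dots> = - (Q*chi*U*f)" unfolding ssq by (simp add: power2_eq_square algebra_simps)
    finally show ?thesis .
  qed
  have lmlp: "lp - lm = s" using lm lp by simp
  define E where "E = exp (L*t)"
  define em where "em = exp (lm*t)"
  define ep where "ep = exp (lp*t)"
  define de where "de = ep - em"
  have E0: "E > 0" by (simp add: E_def)
  have em0: "em > 0" by (simp add: em_def)
  have lmlp': "lm \<le> lp" using lmlp spos by simp
  have emep: "em \<le> ep" unfolding em_def ep_def using lmlp' t by (simp add: mult_right_mono)
  have epE: "ep \<le> E" unfolding E_def ep_def using L t by (simp add: mult_right_mono)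
  have emE: "em \<le> E" using emep epE by simp
  have de0: "de \<ge> 0" using emep by (simp add: de_def)
  have de_eq: "de = E * exp (- (L - lp) * t) * (1 - exp (- s * t))"
  proof -
    have "ep = E * exp (- (L - lp) * t)" by (simp add: E_def ep_def flip: exp_add) (simp add: algebra_simps)
    moreover have "em = ep * exp (- s * t)" using lmlp by (simp add: em_def ep_def flip: exp_add) (simp add: algebra_simps)
    ultimately show ?thesis by (simp add: de_def algebra_simps)
  qed
  have dsb: "de / s \<le> 4 * E / B"
  proof -
    have "de / s \<le> 2 * E / (s + (L - lp))"
      unfolding de_eq by (rule de_bound) (use spos L t E0 in auto)
    also have "\<dots> \<le> 2 * E / (B / 2)"
    proof (rule divide_left_mono)
      show "B / 2 \<le> s + (L - lp)" using lp lm L spos by simp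
      show "0 \<le> 2 * E" using E0 by simp
      show "0 < (s + (L - lp)) * (B / 2)" using spos L Bpos by (intro mult_pos_pos) auto
    qed
    also have "\<dots> = 4 * E / B" by simp
    finally show ?thesis .
  qed
  have ds0: "de / s \<ge> 0" using de0 spos by simp
  define y where "y = de / s"
  have y0: "y \<ge> 0" using ds0 by (simp add: y_def)
  have ysb: "y \<le> 4 * E / B" using dsb by (simp add: y_def)
  have dey: "de = s * y" using spos by (simp add: y_def)
  have K0m: "K0 = 5 + 4*m/k + 4*chi*U/(mu+D) + 4*f/k" by (simp add: K0_def m_def field_simps)
  have mk: "m / B \<le> m / k" using m0 Bk pos by (intro divide_left_mono) auto
  have QBm: "Q / B \<le> 1 / (mu+D)" using QB Bpos muD by (simp add: field_simps)
  have bnd1: "\<bar>em + (lp + b) * y\<bar> \<le> E * (5 + 4*m/k)"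
  proof -
    have "\<bar>(lp + b) * y\<bar> = \<bar>lp + b\<bar> * y" by (simp only: abs_mult abs_of_nonneg[OF y0])
    also have "\<dots> \<le> (B + m) * (4 * E / B)"
      using hp ysb y0 Bpos m0 by (intro mult_mono) auto
    also have "\<dots> = 4 * E + 4 * E * (m / B)" using Bpos by (simp add: field_simps)
    also have "\<dots> \<le> 4 * E + 4 * E * (m / k)" using mult_left_mono[OF mk, of "4 * E"] E0 by linarith
    finally have X: "\<bar>(lp + b) * y\<bar> \<le> 4 * E + 4 * E * (m / k)" .
    have "\<bar>em + (lp + b) * y\<bar> \<le> \<bar>em\<bar> + \<bar>(lp + b) * y\<bar>" by (rule abs_triangle_ineq)
    also have "\<dots> \<le> E + (4 * E + 4 * E * (m / k))" using X emE abs_of_pos[OF em0] by (intro add_mono) auto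
    also have "\<dots> = E * (5 + 4*m/k)" by (simp add: algebra_simps)
    finally show ?thesis .
  qed
  have bnd1': "\<bar>em - (lm + b) * y\<bar> \<le> E * (5 + 4*m/k)"
  proof -
    have "\<bar>(lm + b) * y\<bar> = \<bar>lm + b\<bar> * y" by (simp only: abs_mult abs_of_nonneg[OF y0])
    also have "\<dots> \<le> (B + m) * (4 * E / B)"
      using hm ysb y0 Bpos m0 by (intro mult_mono) auto
    also have "\<dots> = 4 * E + 4 * E * (m / B)" using Bpos by (simp add: field_simps)
    also have "\<dots> \<le> 4 * E + 4 * E * (m / k)" using mult_left_mono[OF mk, of "4 * E"] E0 by linarith
    finally have X: "\<bar>(lm + b) * y\<bar> \<le> 4 * E + 4 * E * (m / k)" .
    have "\<bar>em - (lm + b) * y\<bar> \<le> \<bar>em\<bar> + \<bar>(lm + b) * y\<bar>" by (rule abs_triangle_ineq4)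
    also have "\<dots> \<le> E + (4 * E + 4 * E * (m / k))" using X emE abs_of_pos[OF em0] by (intro add_mono) auto
    also have "\<dots> = E * (5 + 4*m/k)" by (simp add: algebra_simps)
    finally show ?thesis .
  qed
  have bnd2: "\<bar>Q*chi*U * y\<bar> \<le> E * (4*chi*U/(mu+D))"
  proof -
    have "\<bar>Q*chi*U * y\<bar> = chi*U * Q * y"
      using pos Q by (simp only: abs_mult abs_of_nonneg[OF y0] abs_of_nonneg[OF Q] abs_of_pos) (simp add: mult_ac)
    also have "\<dots> \<le> chi*U * Q * (4 * E / B)" using ysb pos Q by (intro mult_left_mono) auto
    also have "\<dots> = 4*chi*U*E * (Q / B)" by simp
    also have "\<dots> \<le> 4*chi*U*E * (1/(mu+D))" using QBm pos E0 by (intro mult_left_mono) auto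
    also have "\<dots> = E * (4*chi*U/(mu+D))" by simp
    finally show ?thesis .
  qed
  have bnd3: "\<bar>f * y\<bar> \<le> E * (4*f/k)"
  proof -
    have "\<bar>f * y\<bar> = f * y" using pos by (simp only: abs_mult abs_of_nonneg[OF y0] abs_of_pos)
    also have "\<dots> \<le> f * (4 * E / B)" using ysb pos by (intro mult_left_mono) auto
    also have "\<dots> \<le> f * (4 * E / k)" using Bk pos E0 by (intro mult_left_mono divide_left_mono) auto
    also have "\<dots> = E * (4*f/k)" by simp
    finally show ?thesis .
  qed
  define rm where "rm = (lm + b)/f"
  define rp where "rp = (lp + b)/f"
  have rmf: "rm * (lp + b) = - (Q*chi*U)" using prod pos by (simp add: rm_def field_simps)
  have rpf: "rp * (lp + b) - rm * (lp + b) = s * rp"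
    using lmlp pos by (simp add: rm_def rp_def field_simps)
  have a0': "a0 = wm * rm + wp * rp" using a0 by (simp add: rm_def rp_def b_def add.assoc)
  have rep1: "wm * rm * em + wp * rp * ep = a0 * (em + (lp + b) * y) + b0 * (Q*chi*U * y)"
  proof -
    have c1: "rm * (em + (lp + b) * y) + Q*chi*U * y = rm * em"
    proof -
      have "rm * (em + (lp + b) * y) + Q*chi*U * y = rm * em + (rm * (lp + b) + Q*chi*U) * y"
        by (simp add: algebra_simps)
      also have "\<dots> = rm * em" using rmf by simp
      finally show ?thesis .
    qed
    have c2: "rp * (em + (lp + b) * y) + Q*chi*U * y = rp * ep"
    proof -
      have "rp * (em + (lp + b) * y) + Q*chi*U * y = rp * em + (rp * (lp + b) - rm * (lp + b)) * y"
        using rmf by (simp add: algebra_simps)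
      also have "\<dots> = rp * em + s * rp * y" using rpf by simp
      also have "\<dots> = rp * ep" using dey by (simp add: de_def algebra_simps)
      finally show ?thesis .
    qed
    have "a0 * (em + (lp + b) * y) + b0 * (Q*chi*U * y) = wm * (rm * (em + (lp + b) * y) + Q*chi*U * y) + wp * (rp * (em + (lp + b) * y) + Q*chi*U * y)"
      unfolding a0' b0 by (simp add: algebra_simps)
    also have "\<dots> = wm * (rm * em) + wp * (rp * ep)" by (simp only: c1 c2)
    finally show ?thesis by (simp add: mult.assoc)
  qed
  have rep2: "wm * em + wp * ep = a0 * (f * y) + b0 * (em - (lm + b) * y)"
  proof -
    have rmf': "rm * f = lm + b" and rpf': "rp * f = lp + b" using pos by (simp_all add: rm_def rp_def)
    have c1: "rm * (f * y) + (em - (lm + b) * y) = em"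
      by (simp only: mult.assoc[symmetric] rmf')
    have c2: "rp * (f * y) + (em - (lm + b) * y) = ep"
    proof -
      have "rp * (f * y) + (em - (lm + b) * y) = em + ((lp + b) - (lm + b)) * y"
        by (simp only: mult.assoc[symmetric] rpf') (simp add: algebra_simps)
      also have "\<dots> = ep" using lmlp dey by (simp add: de_def)
      finally show ?thesis .
    qed
    have "a0 * (f * y) + b0 * (em - (lm + b) * y) = wm * (rm * (f * y) + (em - (lm + b) * y)) + wp * (rp * (f * y) + (em - (lm + b) * y))"
      unfolding a0' b0 by (simp add: algebra_simps)
    also have "\<dots> = wm * em + wp * ep" by (simp only: c1 c2)
    finally show ?thesis by simp
  qed
  have K0ge: "E * (5 + 4*m/k) \<le> K0 * E" "E * (4*chi*U/(mu+D)) \<le> K0 * E" "E * (4*f/k) \<le> K0 * E"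
  proof -
    have a1: "0 \<le> 4*m/k" using m0 pos by simp
    have a2: "0 \<le> 4*chi*U/(mu+D)" using pos muD by simp
    have a3: "0 \<le> 4*f/k" using pos by simp
    have h: "5 + 4*m/k \<le> K0" "4*chi*U/(mu+D) \<le> K0" "4*f/k \<le> K0" using a1 a2 a3 K0m by linarith+
    show "E * (5 + 4*m/k) \<le> K0 * E" using mult_left_mono[OF h(1), of E] E0 by (simp only: mult.commute[of K0]; simp)
    show "E * (4*chi*U/(mu+D)) \<le> K0 * E" using mult_left_mono[OF h(2), of E] E0 by (simp only: mult.commute[of K0]; simp)
    show "E * (4*f/k) \<le> K0 * E" using mult_left_mono[OF h(3), of E] E0 by (simp only: mult.commute[of K0]; simp)
  qed
  have gen: "\<bar>a0 * P + b0 * R\<bar> \<le> K0 * E * (\<bar>a0\<bar> + \<bar>b0\<bar>)" if "\<bar>P\<bar> \<le> K0 * E" "\<bar>R\<bar> \<le> K0 * E" for P R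
  proof -
    have "\<bar>a0 * P + b0 * R\<bar> \<le> \<bar>a0\<bar> * \<bar>P\<bar> + \<bar>b0\<bar> * \<bar>R\<bar>" by (simp add: abs_mult abs_triangle_ineq[THEN order_trans])
    also have "\<dots> \<le> \<bar>a0\<bar> * (K0 * E) + \<bar>b0\<bar> * (K0 * E)"
      using that by (intro add_mono mult_left_mono) auto
    finally show ?thesis by (simp add: algebra_simps)
  qed
  show "\<bar>wm * ((lm + D*Q + k)/f) * exp (lm*t) + wp * ((lp + D*Q + k)/f) * exp (lp*t)\<bar> \<le> K0 * exp (L*t) * (\<bar>a0\<bar> + \<bar>b0\<bar>)"
  proof -
    have "wm * ((lm + D*Q + k)/f) * exp (lm*t) + wp * ((lp + D*Q + k)/f) * exp (lp*t) = wm * rm * em + wp * rp * ep"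
      by (simp add: rm_def rp_def b_def em_def ep_def add.assoc)
    also have "\<dots> = a0 * (em + (lp + b) * y) + b0 * (Q*chi*U * y)" by (rule rep1)
    finally have eqn: "wm * ((lm + D*Q + k)/f) * exp (lm*t) + wp * ((lp + D*Q + k)/f) * exp (lp*t) = a0 * (em + (lp + b) * y) + b0 * (Q*chi*U * y)" .
    show ?thesis unfolding eqn E_def[symmetric]
      by (rule gen[OF order_trans[OF bnd1 K0ge(1)] order_trans[OF bnd2 K0ge(2)]])
  qed
  show "\<bar>wm * exp (lm*t) + wp * exp (lp*t)\<bar> \<le> K0 * exp (L*t) * (\<bar>a0\<bar> + \<bar>b0\<bar>)"
  proof -
    have "wm * exp (lm*t) + wp * exp (lp*t) = wm * em + wp * ep" by (simp add: em_def ep_def)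
    also have "\<dots> = a0 * (f * y) + b0 * (em - (lm + b) * y)" by (rule rep2)
    finally have eqn: "wm * exp (lm*t) + wp * exp (lp*t) = a0 * (f * y) + b0 * (em - (lm + b) * y)" .
    show ?thesis unfolding eqn E_def[symmetric]
      by (rule gen[OF order_trans[OF bnd3 K0ge(3)] order_trans[OF bnd1' K0ge(1)]])
  qed
qed

lemma lp_le:
  fixes mu chi D f k U Q B C s lp :: real
  assumes pos: "mu > 0" "chi > 0" "D > 0" "f > 0" "k > 0" "U > 0" and Q: "Q \<ge> 0"
    and B: "B = Q*(mu+D)+k" and C: "C = Q*(mu*(D*Q+k) - chi*U*f)" and s: "s = sqrt (B^2 - 4*C)"
    and lp: "lp = (-B + s)/2"
  shows "lp \<le> chi*U*f/(mu+D)"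
proof -
  define b where "b = D*Q + k"
  define m where "m = 2*chi*U*f/(mu+D)"
  have muD: "mu + D > 0" using pos by simp
  have b0': "b > 0" using pos Q by (simp add: b_def add_nonneg_pos)
  have Bb: "B = mu*Q + b" by (simp add: B b_def algebra_simps)
  have Bpos: "B > 0" using pos Q by (simp add: B add_nonneg_pos)
  have QB: "Q*(mu+D) \<le> B" using pos by (simp add: B)
  have m0: "m \<ge> 0" using pos muD by (simp add: m_def)
  have disc: "B^2 - 4*C = (mu*Q - b)^2 + 4*(Q*chi*U*f)"
    by (simp add: Bb C b_def power2_eq_square algebra_simps)
  have dnn: "B^2 - 4*C \<ge> 0" using disc pos Q by simp
  have ssq: "s^2 = (mu*Q - b)^2 + 4*(Q*chi*U*f)" using dnn s disc by simp
  have "4*(Q*chi*U*f) \<le> 2*m*B"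
  proof -
    have "4*(Q*chi*U*f) = 4*chi*U*f*(Q*(mu+D))/(mu+D)" using muD by (simp add: field_simps)
    also have "\<dots> \<le> 4*chi*U*f*B/(mu+D)"
      using QB pos muD by (intro divide_right_mono mult_left_mono) auto
    also have "\<dots> = 2*m*B" by (simp add: m_def)
    finally show ?thesis .
  qed
  have "(mu*Q - b)^2 \<le> B^2"
  proof -
    have "\<bar>mu*Q - b\<bar> \<le> B" using Bb b0' pos Q by (simp add: abs_le_iff)
    then have "\<bar>mu*Q - b\<bar>^2 \<le> B^2" by (intro power_mono) auto
    then show ?thesis by simp
  qed
  then have "s^2 \<le> B^2 + 2*m*B" using ssq \<open>4*(Q*chi*U*f) \<le> 2*m*B\<close> by linarith
  also have "\<dots> \<le> (B + m)^2" using zero_le_power2[of m] by (simp add: power2_sum)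
  finally have "s^2 \<le> (B + m)^2" .
  moreover have "0 \<le> B + m" using Bpos m0 by simp
  ultimately have "s \<le> B + m" by (rule power2_le_imp_le)
  then show ?thesis using lp by (simp add: m_def)
qed

lemma qsq_nonneg: "qsq q \<ge> 0"
  unfolding qsq_def by (rule sum_nonneg) simp

lemma lam_plus_eq: "lam_plus mu chi D f k U q =
  (- (qsq q*(mu+D)+k) + sqrt ((qsq q*(mu+D)+k)^2 - 4*(qsq q*(mu*(D*qsq q+k) - chi*U*f))))/2"
  by (simp add: lam_plus_def Let_def)

lemma lam_minus_eq: "lam_minus mu chi D f k U q =
  (- (qsq q*(mu+D)+k) - sqrt ((qsq q*(mu+D)+k)^2 - 4*(qsq q*(mu*(D*qsq q+k) - chi*U*f))))/2"
  by (simp add: lam_minus_def Let_def)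

lemma lam_plus_bound:
  assumes pos: "mu > 0" "chi > 0" "D > 0" "f > 0" "k > 0" "U > 0"
  shows "lam_plus mu chi D f k U q \<le> chi*U*f/(mu+D)"
  unfolding lam_plus_eq by (rule lp_le[OF pos qsq_nonneg refl refl refl refl])

lemma lam_plus_zero:
  assumes "k > 0"
  shows "lam_plus mu chi D f k U (\<lambda>_::'d::finite. 0) = 0"
  using assms by (simp add: lam_plus_eq qsq_def)

lemma lam_max_ge:
  assumes pos: "mu > 0" "chi > 0" "D > 0" "f > 0" "k > 0" "U > 0"
  shows "lam_plus mu chi D f k U (q::'d::finite \<Rightarrow> nat) \<le> lam_max mu chi D f k U TYPE('d)"
  unfolding lam_max_def
  by (rule cSUP_upper) (auto intro!: bdd_aboveI2 lam_plus_bound[OF pos])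

lemma lam_max_nonneg:
  assumes pos: "mu > 0" "chi > 0" "D > 0" "f > 0" "k > 0" "U > 0"
  shows "0 \<le> lam_max mu chi D f k U TYPE('d::finite)"
  using lam_max_ge[OF pos, of "\<lambda>_::'d. 0"] lam_plus_zero[of k mu chi D f U, where 'd='d] pos by simp

lemma sq_sum_bound:
  fixes a b x y X :: real
  assumes "\<bar>a\<bar> \<le> X * (\<bar>x\<bar> + \<bar>y\<bar>)" "\<bar>b\<bar> \<le> X * (\<bar>x\<bar> + \<bar>y\<bar>)" "X \<ge> 0"
  shows "a^2 + b^2 \<le> 4 * X^2 * (x^2 + y^2)"
proof -
  have "a^2 \<le> (X * (\<bar>x\<bar> + \<bar>y\<bar>))^2" using assms(1) by (metis abs_ge_zero power2_abs power_mono)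
  moreover have "b^2 \<le> (X * (\<bar>x\<bar> + \<bar>y\<bar>))^2" using assms(2) by (metis abs_ge_zero power2_abs power_mono)
  moreover have "(\<bar>x\<bar> + \<bar>y\<bar>)^2 \<le> 2 * (x^2 + y^2)"
  proof -
    have "0 \<le> (\<bar>x\<bar> - \<bar>y\<bar>)^2" by simp
    then show ?thesis by (simp add: power2_eq_square algebra_simps)
  qed
  then have "(X * (\<bar>x\<bar> + \<bar>y\<bar>))^2 \<le> X^2 * (2 * (x^2 + y^2))"
    by (simp add: power_mult_distrib mult_left_mono)
  ultimately show ?thesis by (simp add: algebra_simps)
qed

lemma L2norm_eq:
  assumes "L2 (u :: real^'d::finite \<Rightarrow> real)" "L2 v"
  shows "L2norm u v = sqrt (integral\<^sup>L MC (\<lambda>x. (u x)^2) + integral\<^sup>L MC (\<lambda>x. (v x)^2))"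
  unfolding L2norm_def using L2_sq_int[OF assms(1)] L2_sq_int[OF assms(2)]
  by (simp add: Bochner_Integration.integral_add)

theorem lemma1:
  fixes mu chi D f k U :: real
  assumes "mu > 0" "chi > 0" "D > 0" "f > 0" "k > 0" "U > 0"
    and "CARD('d::finite) \<in> {1, 2, 3}"
    and "\<exists>q::'d \<Rightarrow> nat. mu * (D * qsq q + k) - chi * U * f < 0"
  shows "\<exists>C1\<ge>1. \<forall>(u0::real^'d \<Rightarrow> real) v0 u v.
           L2 u0 \<and> L2 v0 \<and> (\<forall>t\<ge>0. L2 (u t) \<and> L2 (v t)) \<and>
           ks_solution mu chi D f k U u0 v0 u v \<longrightarrow>
           (\<forall>t\<ge>0. L2norm (u t) (v t) \<le> C1 * exp (lam_max mu chi D f k U TYPE('d) * t) * L2norm u0 v0)"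
proof -
  note pos = assms(1-6)
  define K0 where "K0 = 5 + 8*chi*U*f/((mu+D)*k) + 4*chi*U/(mu+D) + 4*f/k"
  have K05: "5 \<le> K0" unfolding K0_def using pos by (simp add: add_nonneg_nonneg)
  show ?thesis
  proof (intro exI[of _ "2*K0"] conjI allI impI)
    show "1 \<le> 2*K0" using K05 by simp
  next
    fix u0 v0 :: "real^'d \<Rightarrow> real" and u v :: "real \<Rightarrow> real^'d \<Rightarrow> real" and t :: real
    assume H: "L2 u0 \<and> L2 v0 \<and> (\<forall>t\<ge>0. L2 (u t) \<and> L2 (v t)) \<and> ks_solution mu chi D f k U u0 v0 u v"
      and t: "0 \<le> t"
    have u0: "L2 u0" and v0: "L2 v0" and ut: "L2 (u t)" and vt: "L2 (v t)" using H t by auto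
    define L where "L = lam_max mu chi D f k U TYPE('d)"
    define E where "E = exp (L * t)"
    have E0: "E > 0" by (simp add: E_def)
    have KE0: "K0 * E \<ge> 0" using K05 E0 by simp
    obtain wm wp :: "('d \<Rightarrow> nat) \<Rightarrow> real" where ws: "\<And>q.
       (let lm = lam_minus mu chi D f k U q; lp = lam_plus mu chi D f k U q in
        coeff u0 q = wm q * rfirst D f k lm q + wp q * rfirst D f k lp q \<and>
        coeff v0 q = wm q + wp q \<and>
        (\<forall>t\<ge>0. coeff (u t) q = wm q * rfirst D f k lm q * exp (lm * t)
                              + wp q * rfirst D f k lp q * exp (lp * t) \<and>
               coeff (v t) q = wm q * exp (lm * t) + wp q * exp (lp * t)))"
      using H unfolding ks_solution_def by blast
    have pq: "(coeff (u t) q)^2 + (coeff (v t) q)^2 \<le> 4 * (K0*E)^2 * ((coeff u0 q)^2 + (coeff v0 q)^2)" for q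
    proof -
      define lm where "lm = lam_minus mu chi D f k U q"
      define lp where "lp = lam_plus mu chi D f k U q"
      have w: "coeff u0 q = wm q * ((lm + D * qsq q + k)/f) + wp q * ((lp + D * qsq q + k)/f)"
        "coeff v0 q = wm q + wp q"
        "coeff (u t) q = wm q * ((lm + D * qsq q + k)/f) * exp (lm * t) + wp q * ((lp + D * qsq q + k)/f) * exp (lp * t)"
        "coeff (v t) q = wm q * exp (lm * t) + wp q * exp (lp * t)"
        using ws[of q] t unfolding Let_def rfirst_def lm_def[symmetric] lp_def[symmetric] by auto
      have lmeq: "lm = (- (qsq q*(mu+D)+k) - sqrt ((qsq q*(mu+D)+k)^2 - 4*(qsq q*(mu*(D*qsq q+k) - chi*U*f))))/2"
        unfolding lm_def by (rule lam_minus_eq)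
      have lpeq: "lp = (- (qsq q*(mu+D)+k) + sqrt ((qsq q*(mu+D)+k)^2 - 4*(qsq q*(mu*(D*qsq q+k) - chi*U*f))))/2"
        unfolding lp_def by (rule lam_plus_eq)
      have lpL: "lp \<le> L" unfolding lp_def L_def by (rule lam_max_ge[OF pos])
      have Lnn: "0 \<le> L" unfolding L_def by (rule lam_max_nonneg[OF pos])
      have mb: "\<bar>wm q * ((lm + D*qsq q + k)/f) * exp (lm*t) + wp q * ((lp + D*qsq q + k)/f) * exp (lp*t)\<bar> \<le> K0 * exp (L*t) * (\<bar>coeff u0 q\<bar> + \<bar>coeff v0 q\<bar>)"
        "\<bar>wm q * exp (lm*t) + wp q * exp (lp*t)\<bar> \<le> K0 * exp (L*t) * (\<bar>coeff u0 q\<bar> + \<bar>coeff v0 q\<bar>)"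
        unfolding K0_def
        by (rule mode_bound[OF pos qsq_nonneg[of q] t refl refl refl lmeq lpeq lpL Lnn w(1) w(2)])+
      show ?thesis
        using sq_sum_bound[OF mb[folded E_def w(3) w(4)] KE0] by simp
    qed
    have Npos: "Nq q > 0" for q :: "'d \<Rightarrow> nat" by (rule Nq_pos)
    have nn: "0 \<le> (coeff g q)^2 / Nq q" for g and q :: "'d \<Rightarrow> nat" using Npos[of q] by simp
    have main: "integral\<^sup>L MC (\<lambda>x. (u t x)^2) + integral\<^sup>L MC (\<lambda>x. (v t x)^2)
        \<le> 4 * (K0*E)^2 * (integral\<^sup>L MC (\<lambda>x. (u0 x)^2) + integral\<^sup>L MC (\<lambda>x. (v0 x)^2))"
    proof (rule field_le_epsilon)
      fix e :: real assume e: "0 < e"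
      obtain F1 c1 where F1: "finite F1" "integral\<^sup>L MC (\<lambda>x. (u t x - (\<Sum>q\<in>F1. c1 q * eq q x))^2) < e/2"
        using density[OF ut, of "e/2"] e by auto
      obtain F2 c2 where F2: "finite F2" "integral\<^sup>L MC (\<lambda>x. (v t x - (\<Sum>q\<in>F2. c2 q * eq q x))^2) < e/2"
        using density[OF vt, of "e/2"] e by auto
      define F where "F = F1 \<union> F2"
      have fin: "finite F" using F1 F2 by (simp add: F_def)
      have s1: "(\<Sum>q\<in>F1. (coeff (u t) q)^2 / Nq q) \<le> (\<Sum>q\<in>F. (coeff (u t) q)^2 / Nq q)"
        by (rule sum_mono2[OF fin]) (auto simp: F_def nn)
      have s2: "(\<Sum>q\<in>F2. (coeff (v t) q)^2 / Nq q) \<le> (\<Sum>q\<in>F. (coeff (v t) q)^2 / Nq q)"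
        by (rule sum_mono2[OF fin]) (auto simp: F_def nn)
      have A1: "integral\<^sup>L MC (\<lambda>x. (u t x)^2) \<le> (\<Sum>q\<in>F1. (coeff (u t) q)^2 / Nq q)
           + integral\<^sup>L MC (\<lambda>x. (u t x - (\<Sum>q\<in>F1. c1 q * eq q x))^2)"
        by (rule approx_bound[OF ut F1(1)])
      have A2: "integral\<^sup>L MC (\<lambda>x. (v t x)^2) \<le> (\<Sum>q\<in>F2. (coeff (v t) q)^2 / Nq q)
           + integral\<^sup>L MC (\<lambda>x. (v t x - (\<Sum>q\<in>F2. c2 q * eq q x))^2)"
        by (rule approx_bound[OF vt F2(1)])
      have "(\<Sum>q\<in>F. (coeff (u t) q)^2 / Nq q) + (\<Sum>q\<in>F. (coeff (v t) q)^2 / Nq q)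
          = (\<Sum>q\<in>F. ((coeff (u t) q)^2 + (coeff (v t) q)^2) / Nq q)"
        by (simp add: sum.distrib add_divide_distrib)
      also have "\<dots> \<le> (\<Sum>q\<in>F. (4 * (K0*E)^2 * ((coeff u0 q)^2 + (coeff v0 q)^2)) / Nq q)"
        by (rule sum_mono) (rule divide_right_mono[OF pq], use Npos in \<open>simp add: less_imp_le\<close>)
      also have "\<dots> = 4 * (K0*E)^2 * ((\<Sum>q\<in>F. (coeff u0 q)^2 / Nq q) + (\<Sum>q\<in>F. (coeff v0 q)^2 / Nq q))"
        by (simp add: sum_distrib_left sum.distrib add_divide_distrib distrib_left)
      also have "\<dots> \<le> 4 * (K0*E)^2 * (integral\<^sup>L MC (\<lambda>x. (u0 x)^2) + integral\<^sup>L MC (\<lambda>x. (v0 x)^2))"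
        by (intro mult_left_mono add_mono bessel[OF u0 fin] bessel[OF v0 fin]) simp
      finally show "integral\<^sup>L MC (\<lambda>x. (u t x)^2) + integral\<^sup>L MC (\<lambda>x. (v t x)^2)
        \<le> 4 * (K0*E)^2 * (integral\<^sup>L MC (\<lambda>x. (u0 x)^2) + integral\<^sup>L MC (\<lambda>x. (v0 x)^2)) + e"
        using A1 A2 s1 s2 F1(2) F2(2) by linarith
    qed
    define S0 where "S0 = integral\<^sup>L MC (\<lambda>x. (u0 x)^2) + integral\<^sup>L MC (\<lambda>x. (v0 x)^2)"
    have "L2norm (u t) (v t) = sqrt (integral\<^sup>L MC (\<lambda>x. (u t x)^2) + integral\<^sup>L MC (\<lambda>x. (v t x)^2))"
      by (rule L2norm_eq[OF ut vt])
    also have "\<dots> \<le> sqrt ((2*K0*E)^2 * S0)"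
      using main by (simp add: S0_def power_mult_distrib)
    also have "\<dots> = 2*K0*E * sqrt S0"
    proof -
      have "0 \<le> 2*K0*E" using KE0 by (simp add: mult.commute)
      then show ?thesis by (simp add: real_sqrt_mult)
    qed
    also have "\<dots> = 2 * K0 * exp (lam_max mu chi D f k U TYPE('d) * t) * L2norm u0 v0"
      by (simp add: E_def L_def S0_def L2norm_eq[OF u0 v0])
    finally show "L2norm (u t) (v t) \<le> 2 * K0 * exp (lam_max mu chi D f k U TYPE('d) * t) * L2norm u0 v0" .
  qed
qed

end
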